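(* Let $N \to \infty$, and for each $N$ let $\lambda_1 < \lambda_2 < \dots < \lambda_N$ be pairwise coprime positive integers such that, for a fixed constant $c\in(0,1)$, $\lambda_1$ is of order $N^c$ and $\lambda_N = O(N^{1+c})$. Let $1 \le K \le N$ with $K/N \to \rho \in (0,1)$, and let $R = \prod_{i=1}^N \lambda_i$, $R_\ell = \prod_{i=1}^K \lambda_i$. Suppose $\epsilon \leq \frac{(1-\rho)c}{(1+c)^2}$. Then there exist (i) a binary neural network with quadratic threshold functions on $O(N\log N)$ neurons, and (ii) a binary neural network with linear threshold functions on $O(N^{2+2c}\log N)$ neurons, each of which takes as input the noisy grid code $\phi'(x)$ of a location $x \in \{0,1,\dots,R_\ell-1\}$ and outputs $x$ (equivalently the codeword $\phi(x)$) with probability tending to $1$ as $N\to\infty$; i.e. they are decoders of the discrete grid cell code with asymptotically zero error.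
   Context: Discrete grid cell code: for integer $x$, $\phi(x) = (x \bmod \lambda_1, \dots, x \bmod \lambda_N)$; the codewords are $\{\phi(x) : x \in [0, R_\ell - 1]\}$. The noisy version $\phi'(x)$ is obtained by perturbing each coordinate independently: $\phi'_i(x) = \phi_i(x)$ with probability $1-\epsilon$, and $\phi'_i(x)$ is uniform on $\{0,\dots,\lambda_i-1\}$ with probability $\epsilon$. A binary neural network has neuron states in $\{0,1\}$, updated by the rule $\mathbf{x}_i \leftarrow 1$ if $f_i(\mathbf{x}) > \theta_i$ and $0$ otherwise, where $f_i$ is either linear, $f_i(\mathbf{x}) = \sum_j w_{ij}\mathbf{x}_j$ (linear threshold function), or quadratic, $f_i(\mathbf{x}) = \sum_{j,k} w_{ijk}\mathbf{x}_j\mathbf{x}_k + \sum_j w_{ij}\mathbf{x}_j$ (quadratic threshold function). The $i$-th input coordinate $\phi'_i(x)$ is treated as a single input unit taking one of $\lambda_i$ possible values. *)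

theory Defs
  imports "HOL-Probability.Probability"
begin

text \<open>Moduli are indexed from 0: lam i for i < N stands for lambda_(i+1).
  A received word is a function u :: nat => nat, coordinate i < N being phi'_i(x).\<close>

definition grid_code :: "(nat \<Rightarrow> nat) \<Rightarrow> nat \<Rightarrow> nat \<Rightarrow> nat" where
  "grid_code lam x = (\<lambda>i. x mod lam i)"

definition noisy_coord :: "real \<Rightarrow> nat \<Rightarrow> nat \<Rightarrow> nat pmf" where
  "noisy_coord eps l v =
     bind_pmf (bernoulli_pmf eps) (\<lambda>b. if b then pmf_of_set {..<l} else return_pmf v)"

definition noisy_code :: "real \<Rightarrow> nat \<Rightarrow> (nat \<Rightarrow> nat) \<Rightarrow> nat \<Rightarrow> (nat \<Rightarrow> nat) pmf" where
  "noisy_code eps N lam x =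
     Pi_pmf {..<N} 0 (\<lambda>i. noisy_coord eps (lam i) (grid_code lam x i))"

text \<open>Units are the N input units Inl j (j < N), carrying the integer value of the
  j-th input coordinate, and the neurons Inr k (k < nn), carrying states 0/1.
  Neuron k computes f_k(z) = sum_{a,b} W2 k a b z_a z_b + sum_a W1 k a z_a and
  becomes 1 iff f_k(z) > thr k.\<close>

record bnn =
  nn :: nat
  W2 :: "nat \<Rightarrow> nat + nat \<Rightarrow> nat + nat \<Rightarrow> real"
  W1 :: "nat \<Rightarrow> nat + nat \<Rightarrow> real"
  thr :: "nat \<Rightarrow> real"
  steps :: nat
  outs :: "nat list"

definition units :: "nat \<Rightarrow> bnn \<Rightarrow> (nat + nat) set" where
  "units N net = Inl ` {..<N} \<union> Inr ` {..<nn net}"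

definition activation :: "(nat \<Rightarrow> nat) \<Rightarrow> (nat \<Rightarrow> bool) \<Rightarrow> nat + nat \<Rightarrow> real" where
  "activation u s a = (case a of Inl j \<Rightarrow> real (u j) | Inr k \<Rightarrow> (if s k then 1 else 0))"

definition field :: "nat \<Rightarrow> bnn \<Rightarrow> nat \<Rightarrow> (nat + nat \<Rightarrow> real) \<Rightarrow> real" where
  "field N net k z =
     (\<Sum>a\<in>units N net. \<Sum>b\<in>units N net. W2 net k a b * z a * z b)
     + (\<Sum>a\<in>units N net. W1 net k a * z a)"

definition bnn_step :: "nat \<Rightarrow> bnn \<Rightarrow> (nat \<Rightarrow> nat) \<Rightarrow> (nat \<Rightarrow> bool) \<Rightarrow> (nat \<Rightarrow> bool)" where
  "bnn_step N net u s = (\<lambda>k. k < nn net \<and> field N net k (activation u s) > thr net k)"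

definition bnn_run :: "nat \<Rightarrow> bnn \<Rightarrow> (nat \<Rightarrow> nat) \<Rightarrow> (nat \<Rightarrow> bool)" where
  "bnn_run N net u = (bnn_step N net u ^^ steps net) (\<lambda>_. False)"

definition bnn_output :: "nat \<Rightarrow> bnn \<Rightarrow> (nat \<Rightarrow> nat) \<Rightarrow> nat" where
  "bnn_output N net u =
     (\<Sum>j<length (outs net). if bnn_run N net u (outs net ! j) then 2 ^ j else 0)"

text \<open>Linear threshold network: all quadratic weights vanish.
  Every network is a quadratic threshold network.\<close>
definition linear_bnn :: "bnn \<Rightarrow> bool" where
  "linear_bnn net \<longleftrightarrow> (\<forall>k a b. W2 net k a b = 0)"

definition success_prob :: "real \<Rightarrow> nat \<Rightarrow> (nat \<Rightarrow> nat) \<Rightarrow> bnn \<Rightarrow> nat \<Rightarrow> real" where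
  "success_prob eps N lam net x =
     measure_pmf.prob (noisy_code eps N lam x) {u. bnn_output N net u = x}"

end

theory Submission
  imports Defs
begin

lemma noisy_coord_prob_ne:
  assumes "0 \<le> eps" "eps \<le> 1" "0 < l"
  shows "measure_pmf.prob (noisy_coord eps l v) {w. w \<noteq> v} \<le> eps"
proof -
  have "pmf (noisy_coord eps l v) v = eps * pmf (pmf_of_set {..<l}) v + (1 - eps) * 1"
    unfolding noisy_coord_def pmf_bind using assms by (simp add: integral_bernoulli_pmf)
  hence p: "pmf (noisy_coord eps l v) v \<ge> 1 - eps" using assms by simp
  have "measure_pmf.prob (noisy_coord eps l v) {w. w \<noteq> v} = 1 - measure_pmf.prob (noisy_coord eps l v) {v}"
  proof -
    have "{w. w \<noteq> v} = UNIV - {v}" by auto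
    thus ?thesis using measure_pmf.prob_compl[of "{v}" "noisy_coord eps l v"] by simp
  qed
  thus ?thesis using p by (simp add: measure_pmf_single)
qed

lemma noisy_tail:
  fixes eps :: real and N \<tau> :: nat
  assumes e: "0 \<le> eps" "eps \<le> 1" and pos: "\<forall>j<N. 0 < lam j" and N: "N > 0"
    and t: "real \<tau> + 1 - eps * N \<ge> 0"
  shows "measure_pmf.prob (noisy_code eps N lam x)
           {u. \<tau> < card {j\<in>{..<N}. u j \<noteq> x mod lam j}}
         \<le> exp (-2 * (real \<tau> + 1 - eps * N)^2 / N)"
proof -
  define M where "M = noisy_code eps N lam x"
  define Y where "Y = (\<lambda>i (w::nat). if w \<noteq> x mod lam i then 1 else (0::real))"
  define X where "X = (\<lambda>i (f::nat\<Rightarrow>nat). Y i (f i))"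
  interpret Hoeffding_ineq "measure_pmf M" "{..<N}" X "\<lambda>_. 0" "\<lambda>_. 1"
      "\<Sum>i<N. measure_pmf.expectation M (X i)"
  proof unfold_locales
    show "prob_space.indep_vars (measure_pmf M) (\<lambda>_. borel) X {..<N}"
      unfolding M_def noisy_code_def X_def
      by (intro prob_space.indep_vars_compose2[OF _ indep_vars_Pi_pmf])
         (auto simp: measure_pmf.prob_space_axioms)
  qed (auto simp: X_def Y_def)
  have EX: "measure_pmf.expectation M (X i) \<le> eps" if i: "i < N" for i
  proof -
    have "measure_pmf.expectation M (X i) =
        measure_pmf.expectation (map_pmf (\<lambda>f. f i) M) (\<lambda>w. if w \<noteq> x mod lam i then 1 else (0::real))"
      by (simp add: X_def Y_def)
    also have "map_pmf (\<lambda>f. f i) M = noisy_coord eps (lam i) (grid_code lam x i)"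
      using i by (simp add: M_def noisy_code_def Pi_pmf_component)
    also have "measure_pmf.expectation \<dots> (\<lambda>w. if w \<noteq> x mod lam i then 1 else (0::real))
        = measure_pmf.prob (noisy_coord eps (lam i) (grid_code lam x i)) {w. w \<noteq> x mod lam i}"
    proof -
      have "(\<lambda>w. if w \<noteq> x mod lam i then 1 else (0::real)) = indicator {w. w \<noteq> x mod lam i}"
        by (auto simp: indicator_def)
      thus ?thesis by simp
    qed
    also have "\<dots> \<le> eps"
      using noisy_coord_prob_ne[OF e, of "lam i" "x mod lam i"] pos i by (simp add: grid_code_def)
    finally show ?thesis .
  qed
  have mu: "(\<Sum>i<N. measure_pmf.expectation M (X i)) \<le> eps * N"
    using sum_mono[of "{..<N}" "\<lambda>i. measure_pmf.expectation M (X i)" "\<lambda>_. eps"] EX by (simp add: mult.commute)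
  have cardeq: "(\<Sum>i<N. X i u) = real (card {j\<in>{..<N}. u j \<noteq> x mod lam j})" for u
  proof -
    have "(\<Sum>i<N. X i u) = (\<Sum>i\<in>{j\<in>{..<N}. u j \<noteq> x mod lam j}. 1)"
      unfolding X_def Y_def by (intro sum.mono_neutral_cong_right) auto
    thus ?thesis by simp
  qed
  have "measure_pmf.prob M {u. \<tau> < card {j\<in>{..<N}. u j \<noteq> x mod lam j}}
     \<le> measure_pmf.prob M {u\<in>space (measure_pmf M). (\<Sum>i<N. X i u) \<ge> (\<Sum>i<N. measure_pmf.expectation M (X i)) + (real \<tau> + 1 - eps * N)}"
  proof (intro measure_pmf.finite_measure_mono)
    show "{u. \<tau> < card {j\<in>{..<N}. u j \<noteq> x mod lam j}} \<subseteq> {u\<in>space (measure_pmf M). (\<Sum>i<N. X i u) \<ge> (\<Sum>i<N. measure_pmf.expectation M (X i)) + (real \<tau> + 1 - eps * N)}"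
      using mu by (auto simp: cardeq)
  qed auto
  also have "\<dots> \<le> exp (-2 * (real \<tau> + 1 - eps * N)^2 / (\<Sum>i<N. (1 - 0)^2))"
    by (rule Hoeffding_ineq_ge) (use t N in auto)
  finally show ?thesis by (simp add: M_def)
qed

lemma prod_dvd_coprime:
  fixes m :: "nat \<Rightarrow> nat"
  assumes "finite S" "\<And>i j. i \<in> S \<Longrightarrow> j \<in> S \<Longrightarrow> i \<noteq> j \<Longrightarrow> coprime (m i) (m j)"
    "\<And>i. i \<in> S \<Longrightarrow> m i dvd d"
  shows "prod m S dvd d"
  using assms
proof (induction S rule: finite_induct)
  case (insert a F)
  have "coprime (m a) (prod m F)"
    by (rule prod_coprime_right) (use insert in auto)
  moreover have "prod m F dvd d" using insert by auto
  ultimately show ?case using insert by (simp add: divides_mult)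
qed simp

lemma prod_ge_first:
  fixes lam :: "nat \<Rightarrow> nat"
  assumes mono: "\<And>i j. i \<le> j \<Longrightarrow> j < N \<Longrightarrow> lam i \<le> lam j"
    and pos: "\<And>i. i < N \<Longrightarrow> 0 < lam i"
  shows "S \<subseteq> {..<N} \<Longrightarrow> k \<le> card S \<Longrightarrow> (\<Prod>i<k. lam i) \<le> prod lam S"
proof (induction k arbitrary: S)
  case 0
  have "1 \<le> prod lam S"
    using 0 pos by (intro prod_ge_1) (auto simp: Suc_le_eq)
  thus ?case by simp
next
  case (Suc k)
  have fin: "finite S" using Suc.prems finite_subset by blast
  have ne: "S \<noteq> {}" using Suc.prems by auto
  define m where "m = Max S"
  have mS: "m \<in> S" using fin ne m_def by simp
  have "S \<subseteq> {..m}" using fin m_def by auto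
  hence "card S \<le> Suc m" using card_mono[of "{..m}" S] by simp
  hence km: "k \<le> m" using Suc.prems by simp
  have mN: "m < N" using mS Suc.prems by auto
  have c: "k \<le> card (S - {m})" using Suc.prems mS fin by simp
  have IH: "(\<Prod>i<k. lam i) \<le> prod lam (S - {m})"
    using Suc.IH[OF _ c] Suc.prems by auto
  have "(\<Prod>i<Suc k. lam i) = lam k * (\<Prod>i<k. lam i)" by simp
  also have "\<dots> \<le> lam m * prod lam (S - {m})"
    using mono[OF km mN] IH by (intro mult_mono) auto
  also have "\<dots> = prod lam S"
    using fin mS by (simp add: prod.remove)
  finally show ?case .
qed

lemma agree_small:
  fixes lam :: "nat \<Rightarrow> nat"
  assumes incr: "\<And>i j. i < j \<Longrightarrow> j < N \<Longrightarrow> lam i < lam j"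
    and pos: "\<And>i. i < N \<Longrightarrow> 0 < lam i"
    and copr: "\<And>i j. i < N \<Longrightarrow> j < N \<Longrightarrow> i \<noteq> j \<Longrightarrow> coprime (lam i) (lam j)"
    and yx: "y < x" "x < (\<Prod>i<K. lam i)"
  shows "card {j\<in>{..<N}. y mod lam j = x mod lam j} < K"
proof (rule ccontr)
  define S where "S = {j\<in>{..<N}. y mod lam j = x mod lam j}"
  assume "\<not> card {j\<in>{..<N}. y mod lam j = x mod lam j} < K"
  hence K: "K \<le> card S" by (simp add: S_def)
  have mono: "lam i \<le> lam j" if "i \<le> j" "j < N" for i j
    using incr[of i j] that by (cases "i = j") auto
  have "(\<Prod>i<K. lam i) \<le> prod lam S"
    by (rule prod_ge_first[OF mono pos _ K]) (auto simp: S_def)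
  moreover have "prod lam S dvd x - y"
  proof (rule prod_dvd_coprime)
    show "finite S" by (simp add: S_def)
    show "coprime (lam i) (lam j)" if "i \<in> S" "j \<in> S" "i \<noteq> j" for i j
      using copr that by (auto simp: S_def)
    show "lam i dvd x - y" if "i \<in> S" for i
      using that yx by (auto simp: S_def mod_eq_dvd_iff_nat[symmetric] intro: mod_eq_dvd_iff_nat[THEN iffD1])
  qed
  hence "prod lam S \<le> x - y" using yx by (intro dvd_imp_le) auto
  ultimately show False using yx by linarith
qed

lemma decode_unique:
  fixes lam :: "nat \<Rightarrow> nat" and u :: "nat \<Rightarrow> nat"
  assumes incr: "\<And>i j. i < j \<Longrightarrow> j < N \<Longrightarrow> lam i < lam j"
    and pos: "\<And>i. i < N \<Longrightarrow> 0 < lam i"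
    and copr: "\<And>i j. i < N \<Longrightarrow> j < N \<Longrightarrow> i \<noteq> j \<Longrightarrow> coprime (lam i) (lam j)"
    and yx: "y < x" "x < (\<Prod>i<K. lam i)"
    and tau: "2 * \<tau> \<le> N - K" "K \<le> N"
    and err: "card {j\<in>{..<N}. u j \<noteq> x mod lam j} \<le> \<tau>"
  shows "\<tau> < card {j\<in>{..<N}. u j \<noteq> y mod lam j}"
proof -
  define A where "A = {j\<in>{..<N}. y mod lam j = x mod lam j}"
  define B where "B = {j\<in>{..<N}. u j \<noteq> x mod lam j}"
  define C where "C = {j\<in>{..<N}. u j \<noteq> y mod lam j}"
  have "{..<N} \<subseteq> A \<union> B \<union> C" by (auto simp: A_def B_def C_def)
  hence "N \<le> card (A \<union> B \<union> C)" using card_mono[of "A \<union> B \<union> C" "{..<N}"]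
    by (simp add: A_def B_def C_def)
  also have "\<dots> \<le> card A + card B + card C"
    by (metis card_Un_le add_le_mono1 le_trans)
  finally have "N \<le> card A + card B + card C" .
  moreover have "card A < K" unfolding A_def by (rule agree_small[OF incr pos copr yx])
  ultimately show ?thesis using err tau by (simp add: B_def C_def)
qed

lemma shift_sum: "(\<Sum>k\<in>{lo..<lo+len}. h k) = (\<Sum>i<len. h (lo + i::nat))"
proof -
  have "{lo..<lo+len} = (\<lambda>i. lo + i) ` {..<len}"
    by (simp add: lessThan_atLeast0) (simp add: add.commute)
  thus ?thesis by (simp add: sum.reindex)
qed

definition blk :: "nat \<Rightarrow> nat \<Rightarrow> (nat \<Rightarrow> real) \<Rightarrow> nat + nat \<Rightarrow> real" where
  "blk lo len g a = (case a of Inr k \<Rightarrow> if lo \<le> k \<and> k < lo + len then g (k - lo) else 0 | Inl _ \<Rightarrow> 0)"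

definition pt :: "nat \<Rightarrow> real \<Rightarrow> nat + nat \<Rightarrow> real" where
  "pt p c a = (case a of Inr k \<Rightarrow> if k = p then c else 0 | Inl _ \<Rightarrow> 0)"

definition inp :: "nat \<Rightarrow> real \<Rightarrow> nat + nat \<Rightarrow> real" where
  "inp j c a = (case a of Inl k \<Rightarrow> if k = j then c else 0 | Inr _ \<Rightarrow> 0)"

definition blk2 :: "nat \<Rightarrow> nat \<Rightarrow> (nat \<Rightarrow> nat \<Rightarrow> real) \<Rightarrow> nat + nat \<Rightarrow> nat + nat \<Rightarrow> real" where
  "blk2 lo len g a b = blk lo len (\<lambda>i. blk lo len (g i) b) a"

lemma sum_units:
  "(\<Sum>a\<in>units N net. f a) = (\<Sum>j<N. f (Inl j)) + (\<Sum>k<nn net. f (Inr k))"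
proof -
  have "(\<Sum>a\<in>units N net. f a) = sum f (Inl ` {..<N}) + sum f (Inr ` {..<nn net})"
    unfolding units_def by (rule sum.union_disjoint) auto
  thus ?thesis by (simp add: sum.reindex)
qed

lemma blk_sum:
  assumes "lo + len \<le> nn net"
  shows "(\<Sum>a\<in>units N net. blk lo len g a * z a) = (\<Sum>i<len. g i * z (Inr (lo + i)))"
proof -
  have "(\<Sum>k<nn net. blk lo len g (Inr k) * z (Inr k)) = (\<Sum>k\<in>{lo..<lo+len}. g (k - lo) * z (Inr k))"
    using assms by (intro sum.mono_neutral_cong_right) (auto simp: blk_def)
  also have "\<dots> = (\<Sum>i<len. g i * z (Inr (lo + i)))" by (simp add: shift_sum)
  finally show ?thesis by (simp add: sum_units blk_def)
qed

lemma pt_sum: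
  assumes "p < nn net"
  shows "(\<Sum>a\<in>units N net. pt p c a * z a) = c * z (Inr p)"
proof -
  have "(\<Sum>k<nn net. pt p c (Inr k) * z (Inr k)) = (\<Sum>k\<in>{p}. c * z (Inr k))"
    using assms by (intro sum.mono_neutral_cong_right) (auto simp: pt_def)
  thus ?thesis by (simp add: sum_units pt_def)
qed

lemma inp_sum:
  assumes "j < N"
  shows "(\<Sum>a\<in>units N net. inp j c a * z a) = c * z (Inl j)"
proof -
  have "(\<Sum>k<N. inp j c (Inl k) * z (Inl k)) = (\<Sum>k\<in>{j}. c * z (Inl k))"
    using assms by (intro sum.mono_neutral_cong_right) (auto simp: inp_def)
  thus ?thesis by (simp add: sum_units inp_def)
qed

lemma blk2_sum:
  assumes "lo + len \<le> nn net"
  shows "(\<Sum>a\<in>units N net. \<Sum>b\<in>units N net. blk2 lo len g a b * z a * z b)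
       = (\<Sum>i<len. \<Sum>i'<len. g i i' * z (Inr (lo + i)) * z (Inr (lo + i')))"
proof -
  have "(\<Sum>b\<in>units N net. blk2 lo len g a b * z a * z b)
      = blk lo len (\<lambda>i. \<Sum>b\<in>units N net. blk lo len (g i) b * z b) a * z a" for a
    by (cases a) (auto simp: blk2_def blk_def sum_distrib_left sum_distrib_right mult_ac)
  hence "(\<Sum>a\<in>units N net. \<Sum>b\<in>units N net. blk2 lo len g a b * z a * z b)
      = (\<Sum>a\<in>units N net. blk lo len (\<lambda>i. \<Sum>b\<in>units N net. blk lo len (g i) b * z b) a * z a)"
    by simp
  also have "\<dots> = (\<Sum>i<len. (\<Sum>b\<in>units N net. blk lo len (g i) b * z b) * z (Inr (lo + i)))"
    by (rule blk_sum[OF assms])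
  also have "\<dots> = (\<Sum>i<len. (\<Sum>i'<len. g i i' * z (Inr (lo + i'))) * z (Inr (lo + i)))"
    using blk_sum[OF assms] by simp
  finally show ?thesis by (simp add: sum_distrib_left mult_ac)
qed

definition ind :: "bool \<Rightarrow> real" where "ind b = (if b then 1 else 0)"

lemma activation_Inr[simp]: "activation u s (Inr k) = ind (s k)"
  by (simp add: activation_def ind_def)
lemma activation_Inl[simp]: "activation u s (Inl j) = real (u j)"
  by (simp add: activation_def)

datatype role = RingR nat nat | SnapR nat nat | WrapR nat | GtR nat | LtR nat
  | DR | PR | FR | QR nat | XR nat | NoneR

definition coef :: "bool \<Rightarrow> nat \<Rightarrow> real" where
  "coef q i = (if q then 2 ^ i else real i)"

locale dn =
  fixes q :: bool and N :: nat and lam :: "nat \<Rightarrow> nat" and K :: nat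
    and Wd nq m :: nat and E :: "nat \<Rightarrow> nat" and \<tau> :: nat
begin

definition "R = (\<Prod>i<K. lam i)"
definition "ringI j i = j * Wd + i"
definition "snapI j i = N * Wd + j * Wd + i"
definition "wrapI j = 2 * N * Wd + j"
definition "gtI j = 2 * N * Wd + N + j"
definition "ltI j = 2 * N * Wd + 2 * N + j"
definition "dI = 2 * N * Wd + 3 * N"
definition "pI = dI + 1"
definition "fI = dI + 2"
definition "qI b = dI + 3 + b"
definition "xI b = dI + 3 + nq + b"
definition "nnn = dI + 3 + nq + m"

definition decode :: "nat \<Rightarrow> role" where
  "decode k =
    (if k < N * Wd then RingR (k div Wd) (k mod Wd)
     else if k < 2 * N * Wd then SnapR ((k - N * Wd) div Wd) ((k - N * Wd) mod Wd)
     else if k < 2 * N * Wd + N then WrapR (k - 2 * N * Wd)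
     else if k < 2 * N * Wd + 2 * N then GtR (k - (2 * N * Wd + N))
     else if k < dI then LtR (k - (2 * N * Wd + 2 * N))
     else if k = dI then DR else if k = pI then PR else if k = fI then FR
     else if k < dI + 3 + nq then QR (k - (dI + 3))
     else if k < nnn then XR (k - (dI + 3 + nq)) else NoneR)"

definition "MM = 2 * real N + 2"
definition "sumV = blk (snapI 0 0) (K * Wd) (\<lambda>t. real (E (t div Wd)) * coef q (t mod Wd))"

fun w1 :: "role \<Rightarrow> nat + nat \<Rightarrow> real" where
  "w1 (RingR j i) =
     (if q then (\<lambda>a. blk (ringI j 0) Wd (\<lambda>i'. if i' = i then 2 * real i - 1 else if i' < i then 1 else 0) a
                     + pt (wrapI j) (- (2 * real Wd + 2)) a)
      else if i = 1 then blk (ringI j 0) Wd (\<lambda>i'. if 1 \<le> i' \<and> i' < lam j then -1 else 0)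
      else if 2 \<le> i \<and> i < lam j then pt (ringI j (i - 1)) 1 else (\<lambda>_. 0))"
| "w1 (SnapR j i) = (\<lambda>a. pt (snapI j i) 2 a + pt (ringI j i) 1 a + pt pI 1 a)"
| "w1 (WrapR j) = (if q then blk (ringI j 0) Wd (\<lambda>i. 2 * (real (lam j) - 2) * 2 ^ i) else (\<lambda>_. 0))"
| "w1 (GtR j) = (\<lambda>a. blk (ringI j 0) Wd (coef q) a + inp j (-1) a)"
| "w1 (LtR j) = (\<lambda>a. blk (ringI j 0) Wd (\<lambda>i. - coef q i) a + inp j 1 a)"
| "w1 DR = (\<lambda>_. 0)"
| "w1 PR = (\<lambda>a. blk (gtI 0) (2 * N) (\<lambda>_. -1) a + pt fI (- MM) a + pt dI MM a)"
| "w1 FR = (\<lambda>a. blk (gtI 0) (2 * N) (\<lambda>_. -1) a + pt fI (3 * MM) a + pt dI MM a)"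
| "w1 (QR b) = (\<lambda>a. sumV a + blk (qI 0) nq (\<lambda>b'. if b < b' then - (real R * 2 ^ b') else 0) a)"
| "w1 (XR b) = (\<lambda>a. sumV a + blk (qI 0) nq (\<lambda>b'. - (real R * 2 ^ b')) a
                 + blk (xI 0) m (\<lambda>b'. if b < b' then - (2 ^ b') else 0) a)"
| "w1 NoneR = (\<lambda>_. 0)"

fun w2 :: "role \<Rightarrow> nat + nat \<Rightarrow> nat + nat \<Rightarrow> real" where
  "w2 (RingR j i) = (if q then blk2 (ringI j 0) Wd (\<lambda>i1 i2. if i1 = i \<and> i2 < i then -2 else 0)
                     else (\<lambda>_ _. 0))"
| "w2 (WrapR j) = (if q then blk2 (ringI j 0) Wd (\<lambda>i1 i2. - (2 ^ i1 * 2 ^ i2)) else (\<lambda>_ _. 0))"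
| "w2 _ = (\<lambda>_ _. 0)"

fun th :: "role \<Rightarrow> real" where
  "th (RingR j i) = (if q then real i - 1/2 else if i = 1 then - 1/2 else 1/2)"
| "th (SnapR j i) = 3/2"
| "th (WrapR j) = (if q then (real (lam j) - 2)^2 - 1/2 else 1/2)"
| "th (GtR j) = 1/2"
| "th (LtR j) = 1/2"
| "th DR = -1"
| "th PR = MM - real \<tau> - 1/2"
| "th FR = MM - real \<tau> - 1/2"
| "th (QR b) = real R * 2 ^ b - 1/2 - (real R - 2)"
| "th (XR b) = 2 ^ b - 1/2 - (real R - 2)"
| "th NoneR = 1/2"

definition net :: bnn where
  "net = \<lparr> nn = nnn, W2 = (\<lambda>k. w2 (decode k)), W1 = (\<lambda>k. w1 (decode k)),
          thr = (\<lambda>k. th (decode k)), steps = R + nq + m + 3, outs = map xI [0..<m] \<rparr>"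

lemma nn_net[simp]: "nn net = nnn" by (simp add: net_def)

lemma linear: "\<not> q \<Longrightarrow> linear_bnn net"
proof -
  assume "\<not> q"
  have "w2 r a b = 0" for r a b
    by (cases r) (simp_all add: if_not_P[OF \<open>\<not> q\<close>])
  thus ?thesis by (simp add: linear_bnn_def net_def)
qed

end

lemma idx_lt: "j < (N::nat) \<Longrightarrow> i < W \<Longrightarrow> j * W + i < N * W"
proof -
  assume a: "j < N" "i < W"
  have "j * W + i < j * W + W" using a by simp
  also have "\<dots> = Suc j * W" by simp
  also have "\<dots> \<le> N * W" using a by (intro mult_le_mono1) simp
  finally show ?thesis .
qed

lemma sum_if_less: assumes "i \<le> (n::nat)" shows "(\<Sum>k<n. if k < i then f k else 0) = (\<Sum>k<i. f k)"
  using assms by (intro sum.mono_neutral_cong_right) auto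

lemma sum_if_eq: assumes "i < (n::nat)" shows "(\<Sum>k<n. if k = i then f k else 0) = f i"
  using assms by (subst sum.delta) auto

locale dnA = dn +
  assumes Wd_pos: "0 < Wd" and KN: "K \<le> N"
begin

lemma decode_ring: "j < N \<Longrightarrow> i < Wd \<Longrightarrow> decode (ringI j i) = RingR j i"
  using idx_lt[of j N i Wd] by (simp add: decode_def ringI_def)

lemma decode_snap: "j < N \<Longrightarrow> i < Wd \<Longrightarrow> decode (snapI j i) = SnapR j i"
  using idx_lt[of j N i Wd] by (simp add: decode_def snapI_def)

lemma decode_wrap: "j < N \<Longrightarrow> decode (wrapI j) = WrapR j"
  by (simp add: decode_def wrapI_def)
lemma decode_gt: "j < N \<Longrightarrow> decode (gtI j) = GtR j"
  by (simp add: decode_def gtI_def)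
lemma decode_lt: "j < N \<Longrightarrow> decode (ltI j) = LtR j"
  by (simp add: decode_def ltI_def dI_def)
lemma decode_d: "decode dI = DR"
  by (simp add: decode_def dI_def)
lemma decode_p: "decode pI = PR"
  by (simp add: decode_def dI_def pI_def)
lemma decode_f: "decode fI = FR"
  by (simp add: decode_def dI_def pI_def fI_def)
lemma decode_q: "b < nq \<Longrightarrow> decode (qI b) = QR b"
  by (simp add: decode_def dI_def pI_def fI_def qI_def)
lemma decode_x: "b < m \<Longrightarrow> decode (xI b) = XR b"
  by (simp add: decode_def dI_def pI_def fI_def xI_def nnn_def)

lemma lt_ring: "j < N \<Longrightarrow> i < Wd \<Longrightarrow> ringI j i < nnn"
  using idx_lt[of j N i Wd] by (simp add: ringI_def nnn_def dI_def)
lemma lt_snap: "j < N \<Longrightarrow> i < Wd \<Longrightarrow> snapI j i < nnn"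
  using idx_lt[of j N i Wd] by (simp add: snapI_def nnn_def dI_def)
lemma lt_wrap: "j < N \<Longrightarrow> wrapI j < nnn"
  by (simp add: wrapI_def nnn_def dI_def)
lemma lt_gt: "j < N \<Longrightarrow> gtI j < nnn"
  by (simp add: gtI_def nnn_def dI_def)
lemma lt_lt: "j < N \<Longrightarrow> ltI j < nnn"
  by (simp add: ltI_def nnn_def dI_def)
lemma lt_d: "dI < nnn" and lt_p: "pI < nnn" and lt_f: "fI < nnn"
  by (simp_all add: nnn_def pI_def fI_def)
lemma lt_q: "b < nq \<Longrightarrow> qI b < nnn"
  by (simp add: qI_def nnn_def)
lemma lt_x: "b < m \<Longrightarrow> xI b < nnn"
  by (simp add: xI_def nnn_def)

lemma blk_ring: "j < N \<Longrightarrow> ringI j 0 + Wd \<le> nnn"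
proof -
  assume "j < N"
  hence "j * Wd + Wd \<le> N * Wd" by (metis add.commute mult_Suc mult_le_mono1 Suc_le_eq)
  thus ?thesis by (simp add: ringI_def nnn_def dI_def)
qed
lemma blk_gt: "gtI 0 + 2 * N \<le> nnn"
  by (simp add: gtI_def nnn_def dI_def)
lemma blk_snap: "snapI 0 0 + K * Wd \<le> nnn"
proof -
  have "K * Wd \<le> N * Wd" using KN by (rule mult_le_mono1)
  thus ?thesis unfolding snapI_def nnn_def dI_def by linarith
qed
lemma blk_q: "qI 0 + nq \<le> nnn"
  by (simp add: qI_def nnn_def)
lemma blk_x: "xI 0 + m \<le> nnn"
  by (simp add: xI_def nnn_def)


lemma ringI_add[simp]: "ringI j 0 + i = ringI j i" by (simp add: ringI_def)
lemma snapI_add[simp]: "snapI j 0 + i = snapI j i" by (simp add: snapI_def)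

definition "rv s j = (\<Sum>i<Wd. coef q i * ind (s (ringI j i)))"
definition "sv s j = (\<Sum>i<Wd. coef q i * ind (s (snapI j i)))"
definition "cnt s = (\<Sum>i<2 * N. ind (s (gtI 0 + i)))"
definition "SV s = (\<Sum>t<K * Wd. real (E (t div Wd)) * coef q (t mod Wd) * ind (s (snapI 0 0 + t)))"

lemma field_net: "field N net k z = (\<Sum>a\<in>units N net. \<Sum>b\<in>units N net. w2 (decode k) a b * z a * z b)
   + (\<Sum>a\<in>units N net. w1 (decode k) a * z a)"
  by (simp add: field_def net_def)

lemma step_net: "k < nnn \<Longrightarrow> bnn_step N net u s k = (field N net k (activation u s) > th (decode k))"
  by (simp add: bnn_step_def net_def)

lemma w2_zero: "(\<And>a b. w2 r a b = 0) \<Longrightarrow> (\<Sum>a\<in>units N net. \<Sum>b\<in>units N net. w2 r a b * z a * z b) = 0"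
  by simp

lemma F_gt: "j < N \<Longrightarrow> field N net (gtI j) (activation u s) = rv s j - real (u j)"
  using blk_ring[of j] lt_ring[of j]
  by (simp add: field_net decode_gt sum.distrib distrib_right blk_sum inp_sum rv_def)

lemma F_lt: "j < N \<Longrightarrow> field N net (ltI j) (activation u s) = real (u j) - rv s j"
  using blk_ring[of j]
  by (simp add: field_net decode_lt sum.distrib distrib_right blk_sum inp_sum rv_def ringI_def
      sum_negf)

lemma F_d: "field N net dI (activation u s) = 0"
  by (simp add: field_net decode_d)

lemma F_p: "field N net pI (activation u s) = - cnt s - MM * ind (s fI) + MM * ind (s dI)"
  using blk_gt lt_f lt_d
  by (simp add: field_net decode_p sum.distrib distrib_right blk_sum pt_sum cnt_def sum_negf)

lemma F_f: "field N net fI (activation u s) = - cnt s + 3 * MM * ind (s fI) + MM * ind (s dI)"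
  using blk_gt lt_f lt_d
  by (simp add: field_net decode_f sum.distrib distrib_right blk_sum pt_sum cnt_def sum_negf)

lemma F_snap: "j < N \<Longrightarrow> i < Wd \<Longrightarrow> field N net (snapI j i) (activation u s)
    = 2 * ind (s (snapI j i)) + ind (s (ringI j i)) + ind (s pI)"
  using lt_snap[of j i] lt_ring[of j i] lt_p
  by (simp add: field_net decode_snap sum.distrib distrib_right pt_sum)

lemma F_q: "b < nq \<Longrightarrow> field N net (qI b) (activation u s)
    = SV s + (\<Sum>b'<nq. (if b < b' then - (real R * 2 ^ b') else 0) * ind (s (qI 0 + b')))"
  using blk_snap blk_q
  by (simp add: field_net decode_q sum.distrib distrib_right blk_sum sumV_def SV_def)

lemma F_x: "b < m \<Longrightarrow> field N net (xI b) (activation u s)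
    = SV s + (\<Sum>b'<nq. - (real R * 2 ^ b') * ind (s (qI 0 + b')))
       + (\<Sum>b'<m. (if b < b' then - (2 ^ b') else 0) * ind (s (xI 0 + b')))"
  using blk_snap blk_q blk_x
  by (simp add: field_net decode_x sum.distrib distrib_right blk_sum sumV_def SV_def)


lemma F_ring_q:
  assumes qq: q and j: "j < N" and i: "i < Wd"
  shows "field N net (ringI j i) (activation u s)
     = (2 * ind (s (ringI j i)) - 1) * (real i - 1/2 - (\<Sum>i'<i. ind (s (ringI j i'))))
       + (real i - 1/2) - (2 * real Wd + 2) * ind (s (wrapI j))"
proof -
  define b where "b i' = ind (s (ringI j i'))" for i'
  have S2: "(\<Sum>i1<Wd. \<Sum>i2<Wd. (if i1 = i \<and> i2 < i then -2 else 0) * b i1 * b i2)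
      = -2 * b i * (\<Sum>i'<i. b i')"
  proof -
    have "(\<Sum>i1<Wd. \<Sum>i2<Wd. (if i1 = i \<and> i2 < i then -2 else 0) * b i1 * b i2)
       = (\<Sum>i1<Wd. if i1 = i then (\<Sum>i2<Wd. (if i2 < i then -2 else 0) * b i1 * b i2) else 0)"
      by (intro sum.cong refl) auto
    also have "\<dots> = (\<Sum>i2<Wd. (if i2 < i then -2 else 0) * b i * b i2)"
      using i by (simp add: sum_if_eq)
    also have "\<dots> = (\<Sum>i2<Wd. if i2 < i then -2 * b i * b i2 else 0)"
      by (intro sum.cong refl) auto
    also have "\<dots> = (\<Sum>i2<i. -2 * b i * b i2)"
      using i by (intro sum_if_less) simp
    finally show ?thesis by (simp add: sum_distrib_left)
  qed
  have S1: "(\<Sum>i'<Wd. (if i' = i then 2 * real i - 1 else if i' < i then 1 else 0) * b i')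
      = (2 * real i - 1) * b i + (\<Sum>i'<i. b i')"
  proof -
    have "(\<Sum>i'<Wd. (if i' = i then 2 * real i - 1 else if i' < i then 1 else 0) * b i')
        = (\<Sum>i'<Wd. (if i' = i then (2 * real i - 1) * b i' else 0) + (if i' < i then b i' else 0))"
      by (intro sum.cong refl) auto
    also have "\<dots> = (2 * real i - 1) * b i + (\<Sum>i'<i. b i')"
      using i by (simp add: sum.distrib sum_if_eq sum_if_less)
    finally show ?thesis .
  qed
  have "field N net (ringI j i) (activation u s)
     = (\<Sum>i1<Wd. \<Sum>i2<Wd. (if i1 = i \<and> i2 < i then -2 else 0) * b i1 * b i2)
       + ((\<Sum>i'<Wd. (if i' = i then 2 * real i - 1 else if i' < i then 1 else 0) * b i')
       - (2 * real Wd + 2) * ind (s (wrapI j)))"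
    using blk_ring[of j] lt_wrap[of j] j i
    by (simp add: field_net decode_ring if_P[OF qq] blk2_sum sum.distrib distrib_right blk_sum pt_sum
        b_def) (simp add: algebra_simps)
  also have "\<dots> = (2 * b i - 1) * (real i - 1/2 - (\<Sum>i'<i. b i'))
       + (real i - 1/2) - (2 * real Wd + 2) * ind (s (wrapI j))"
    unfolding S1 S2 by (simp add: algebra_simps)
  finally show ?thesis by (simp add: b_def)
qed

lemma F_wrap_q:
  assumes qq: q and j: "j < N"
  shows "field N net (wrapI j) (activation u s)
     = - ((rv s j) ^ 2) + 2 * (real (lam j) - 2) * rv s j"
proof -
  define b where "b i' = ind (s (ringI j i'))" for i'
  have rv: "rv s j = (\<Sum>i<Wd. 2 ^ i * b i)"
    by (simp add: rv_def coef_def if_P[OF qq] b_def)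
  have "field N net (wrapI j) (activation u s)
     = (\<Sum>i1<Wd. \<Sum>i2<Wd. - (2 ^ i1 * 2 ^ i2) * b i1 * b i2)
       + (\<Sum>i<Wd. 2 * (real (lam j) - 2) * 2 ^ i * b i)"
    using blk_ring[of j] j
    by (simp add: field_net decode_wrap if_P[OF qq] blk2_sum blk_sum b_def)
  also have "\<dots> = - ((\<Sum>i<Wd. 2 ^ i * b i) ^ 2) + 2 * (real (lam j) - 2) * (\<Sum>i<Wd. 2 ^ i * b i)"
    by (simp add: power2_eq_square sum_product sum_distrib_left sum_negf mult_ac)
  finally show ?thesis by (simp add: rv)
qed

lemma F_ring_l1:
  assumes qq: "\<not> q" and j: "j < N" and i: "1 < Wd"
  shows "field N net (ringI j 1) (activation u s)
     = (\<Sum>i'<Wd. (if 1 \<le> i' \<and> i' < lam j then -1 else 0) * ind (s (ringI j i')))"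
  using blk_ring[of j] j i
  by (simp add: field_net decode_ring if_not_P[OF qq] blk_sum sum_negf)

lemma F_ring_l2:
  assumes qq: "\<not> q" and j: "j < N" and i: "i < Wd" "2 \<le> i" "i < lam j"
  shows "field N net (ringI j i) (activation u s) = ind (s (ringI j (i - 1)))"
  using lt_ring[of j "i - 1"] j i
  by (simp add: field_net decode_ring if_not_P[OF qq] pt_sum)

lemma F_ring_l0:
  assumes qq: "\<not> q" and j: "j < N" and i: "i < Wd" "i \<noteq> 1" "\<not> (2 \<le> i \<and> i < lam j)"
  shows "field N net (ringI j i) (activation u s) = 0"
  using j i by (auto simp: field_net decode_ring if_not_P[OF qq])

lemma F_wrap_l:
  assumes qq: "\<not> q" and j: "j < N"
  shows "field N net (wrapI j) (activation u s) = 0"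
  using j by (simp add: field_net decode_wrap if_not_P[OF qq])

end

lemma ind_simps[simp]: "ind True = 1" "ind False = 0" by (simp_all add: ind_def)
lemma ind_nonneg: "0 \<le> ind b" and ind_le1: "ind b \<le> 1" by (simp_all add: ind_def)

lemma bin_expand: "(n::nat) < 2 ^ k \<Longrightarrow> (\<Sum>i<k. 2 ^ i * ind (bit n i)) = (real n :: real)"
proof (induction k arbitrary: n)
  case 0 thus ?case by simp
next
  case (Suc k)
  have h: "n div 2 < 2 ^ k" using Suc.prems by simp
  have "(\<Sum>i<Suc k. 2 ^ i * ind (bit n i)) = ind (bit n 0) + (\<Sum>i<k. 2 ^ Suc i * ind (bit n (Suc i)))"
    by (simp only: sum.lessThan_Suc_shift) simp
  also have "(\<Sum>i<k. 2 ^ Suc i * ind (bit n (Suc i))) = 2 * (\<Sum>i<k. 2 ^ i * ind (bit (n div 2) i))"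
    by (simp add: sum_distrib_left bit_Suc mult_ac)
  also have "\<dots> = 2 * real (n div 2)" using Suc.IH[OF h] by simp
  also have "ind (bit n 0) = real (n mod 2)" by (simp add: ind_def bit_0 odd_iff_mod_2_eq_one)
  finally have "(\<Sum>i<Suc k. 2 ^ i * ind (bit n i)) = real (n mod 2) + 2 * real (n div 2)" .
  moreover have "n = n mod 2 + 2 * (n div 2)" by simp
  hence "real n = real (n mod 2) + 2 * real (n div 2)" by (metis of_nat_add of_nat_mult of_nat_numeral)
  ultimately show ?case by simp
qed

lemma mod_two_pow_Suc: "(n::nat) mod 2 ^ Suc i = n mod 2 ^ i + 2 ^ i * ((n div 2 ^ i) mod 2)"
proof -
  have eq: "(2::nat) ^ Suc i = 2 ^ i * 2" by simp
  have "n mod 2 ^ Suc i = n mod (2 ^ i * 2)" by (simp only: eq)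
  also have "\<dots> = 2 ^ i * (n div 2 ^ i mod 2) + n mod 2 ^ i" by (rule mod_mult2_eq)
  finally show ?thesis by linarith
qed

lemma all_low_bits: "(\<forall>i'<i. bit (n::nat) i') \<longleftrightarrow> n mod 2 ^ i = 2 ^ i - 1"
proof (induction i)
  case 0 thus ?case by simp
next
  case (Suc i)
  have e: "n mod 2 ^ Suc i = n mod 2 ^ i + 2 ^ i * ((n div 2 ^ i) mod 2)" by (rule mod_two_pow_Suc)
  have lt: "n mod 2 ^ i < 2 ^ i" by simp
  have "(\<forall>i'<Suc i. bit n i') \<longleftrightarrow> (\<forall>i'<i. bit n i') \<and> bit n i" by (auto simp: less_Suc_eq)
  also have "\<dots> \<longleftrightarrow> n mod 2 ^ i = 2 ^ i - 1 \<and> (n div 2 ^ i) mod 2 = 1"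
    using Suc.IH by (simp add: bit_iff_odd odd_iff_mod_2_eq_one)
  also have "\<dots> \<longleftrightarrow> n mod 2 ^ Suc i = 2 ^ Suc i - 1"
  proof -
    have d: "(n div 2 ^ i) mod 2 = 0 \<or> (n div 2 ^ i) mod 2 = 1" by auto
    have p: "(2::nat) ^ Suc i = 2 ^ i + 2 ^ i" by simp
    have p1: "(1::nat) \<le> 2 ^ i" by simp
    show ?thesis using d
    proof
      assume "(n div 2 ^ i) mod 2 = 0" thus ?thesis using e lt p p1 by (simp; linarith)
    next
      assume "(n div 2 ^ i) mod 2 = 1" thus ?thesis using e lt p p1 by (simp; linarith)
    qed
  qed
  finally show ?case .
qed

lemma succ_div: "((n::nat) + 1) div 2 ^ i = n div 2 ^ i + (if n mod 2 ^ i = 2 ^ i - 1 then 1 else 0)"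
proof -
  define a r where "a = n div 2 ^ i" and "r = n mod 2 ^ i"
  have n: "n + 1 = (r + 1) + 2 ^ i * a" by (simp add: a_def r_def)
  have r: "r < 2 ^ i" by (simp add: r_def)
  have "(n + 1) div 2 ^ i = (r + 1) div 2 ^ i + a" unfolding n by (subst div_mult_self2) auto
  moreover have "(r + 1) div 2 ^ i = (if r = 2 ^ i - 1 then 1 else 0)"
  proof (cases "r = 2 ^ i - 1")
    case True thus ?thesis by simp
  next
    case False
    hence "r + 1 < 2 ^ i" using r by linarith
    thus ?thesis using False by simp
  qed
  ultimately show ?thesis by (simp add: a_def r_def)
qed

lemma bit_succ: "bit ((n::nat) + 1) i \<longleftrightarrow> (bit n i \<noteq> (n mod 2 ^ i = 2 ^ i - 1))"
  unfolding bit_iff_odd succ_div by auto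

lemma sum_ind_card: "(\<Sum>i'<(i::nat). ind (P i')) = real (card {i'\<in>{..<i}. P i'})"
proof -
  have "(\<Sum>i'<i. ind (P i')) = (\<Sum>i'\<in>{i'\<in>{..<i}. P i'}. 1)"
    by (intro sum.mono_neutral_cong_right) (auto simp: ind_def)
  thus ?thesis by simp
qed

lemma card_all: "card {i'\<in>{..<i}. P i'} = i \<longleftrightarrow> (\<forall>i'<i. P i')"
proof
  assume c: "card {i'\<in>{..<i}. P i'} = i"
  have "{i'\<in>{..<i}. P i'} = {..<i}"
    by (rule card_subset_eq[OF finite_lessThan]) (use c in auto)
  thus "\<forall>i'<i. P i'" by auto
next
  assume "\<forall>i'<i. P i'"
  hence "{i'\<in>{..<i}. P i'} = {..<i}" by auto
  thus "card {i'\<in>{..<i}. P i'} = i" by simp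
qed

lemma card_le: "card {i'\<in>{..<i}. P i'} \<le> i"
  using card_mono[of "{..<i}" "{i'\<in>{..<i}. P i'}"] by auto

lemma high_sum:
  assumes n: "(n::nat) < 2 ^ k" and b: "b < k"
  shows "(\<Sum>b'<k. if b < b' then 2 ^ b' * ind (bit n b') else 0) = (2::real) ^ (b + 1) * real (n div 2 ^ (b + 1))"
proof -
  define h where "h = n div 2 ^ (b + 1)"
  have "(2::nat) ^ k = 2 ^ (k - (b + 1) + (b + 1))" using b by simp
  also have "\<dots> = 2 ^ (k - (b + 1)) * 2 ^ (b + 1)" by (rule power_add)
  finally have pk: "2 ^ (k - (b + 1)) * 2 ^ (b + 1) = (2::nat) ^ k" by simp
  have "n div 2 ^ (b + 1) < 2 ^ (k - (b + 1))"
    by (rule less_mult_imp_div_less) (use n pk in simp)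
  hence hx: "(\<Sum>c<k - (b + 1). 2 ^ c * ind (bit h c)) = real h"
    unfolding h_def by (rule bin_expand)
  have bh: "bit h c = bit n (b + 1 + c)" for c
    by (simp add: h_def bit_iff_odd div_mult2_eq power_add mult.commute)
  have "(\<Sum>b'<k. if b < b' then 2 ^ b' * ind (bit n b') else (0::real))
      = (\<Sum>b'\<in>{b + 1..<b + 1 + (k - (b + 1))}. 2 ^ b' * ind (bit n b'))"
    using b by (intro sum.mono_neutral_cong_right) auto
  also have "\<dots> = (\<Sum>c<k - (b + 1). 2 ^ (b + 1 + c) * ind (bit n (b + 1 + c)))"
    by (rule shift_sum)
  also have "\<dots> = 2 ^ (b + 1) * (\<Sum>c<k - (b + 1). 2 ^ c * ind (bit h c))"
    by (simp add: sum_distrib_left power_add bh mult_ac)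
  finally show ?thesis using hx h_def by simp
qed

lemma mod_ge_bit: "(2::nat) ^ b \<le> n mod 2 ^ (b + 1) \<longleftrightarrow> bit n b"
proof -
  have e: "n mod 2 ^ (b + 1) = n mod 2 ^ b + 2 ^ b * ((n div 2 ^ b) mod 2)"
    using mod_two_pow_Suc[of n b] by simp
  have lt: "n mod 2 ^ b < 2 ^ b" by simp
  have d: "(n div 2 ^ b) mod 2 = 0 \<or> (n div 2 ^ b) mod 2 = 1" by auto
  thus ?thesis
  proof
    assume a: "(n div 2 ^ b) mod 2 = 0"
    hence "\<not> bit n b" by (simp add: bit_iff_odd odd_iff_mod_2_eq_one)
    moreover have "\<not> (2::nat) ^ b \<le> n mod 2 ^ (b + 1)" using e a by (simp add: not_le)
    ultimately show ?thesis by simp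
  next
    assume a: "(n div 2 ^ b) mod 2 = 1"
    hence "bit n b" by (simp add: bit_iff_odd odd_iff_mod_2_eq_one)
    moreover have "(2::nat) ^ b \<le> n mod 2 ^ (b + 1)" using e lt a by simp
    ultimately show ?thesis by simp
  qed
qed

lemma greedy:
  assumes n: "(n::nat) < 2 ^ k" and b: "b < k"
  shows "(real n - (\<Sum>b'<k. if b < b' then 2 ^ b' * ind (bit n b') else 0) \<ge> 2 ^ b) \<longleftrightarrow> bit n b"
proof -
  have nn: "n = n mod 2 ^ (b + 1) + 2 ^ (b + 1) * (n div 2 ^ (b + 1))" by simp
  have "real n = real (n mod 2 ^ (b + 1)) + 2 ^ (b + 1) * real (n div 2 ^ (b + 1))"
    by (subst nn) (simp only: of_nat_add of_nat_mult of_nat_power of_nat_numeral)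
  hence "real n - (\<Sum>b'<k. if b < b' then 2 ^ b' * ind (bit n b') else 0) = real (n mod 2 ^ (b + 1))"
    using high_sum[OF n b] by simp
  moreover have "(2::real) ^ b \<le> real (n mod 2 ^ (b + 1)) \<longleftrightarrow> 2 ^ b \<le> n mod 2 ^ (b + 1)"
    by (metis of_nat_le_iff of_nat_numeral of_nat_power)
  ultimately show ?thesis using mod_ge_bit by simp
qed

lemma sum_split_blocks: "(\<Sum>t<K * W. f t) = (\<Sum>i<K. \<Sum>k<W. f (i * W + k :: nat))"
proof (induction K)
  case 0 thus ?case by simp
next
  case (Suc K)
  have "(\<Sum>t<Suc K * W. f t) = (\<Sum>t\<in>{0..<K * W}. f t) + (\<Sum>t\<in>{K * W..<K * W + W}. f t)"
    by (subst sum.atLeastLessThan_concat) (simp_all add: lessThan_atLeast0 add.commute)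
  also have "(\<Sum>t\<in>{0..<K * W}. f t) = (\<Sum>t<K * W. f t)" by (simp add: lessThan_atLeast0)
  also have "(\<Sum>t\<in>{K * W..<K * W + W}. f t) = (\<Sum>k<W. f (K * W + k))" by (rule shift_sum)
  finally show ?case using Suc by simp
qed

lemma int_sq_small: "(real_of_int d)^2 < 1/2 \<Longrightarrow> d = 0"
proof (rule ccontr)
  assume a: "(real_of_int d)^2 < 1/2" "d \<noteq> 0"
  hence "1 \<le> \<bar>d\<bar>" by simp
  hence "1 \<le> \<bar>real_of_int d\<bar>" by linarith
  hence "1 \<le> (real_of_int d)^2" by (metis abs_le_square_iff abs_one one_power2)
  thus False using a by simp
qed
context dnA begin

definition st :: "(nat \<Rightarrow> nat) \<Rightarrow> nat \<Rightarrow> nat \<Rightarrow> bool" where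
  "st u t = (bnn_step N net u ^^ t) (\<lambda>_. False)"

lemma st_0[simp]: "st u 0 k = False" by (simp add: st_def)
lemma st_Suc: "st u (Suc t) = bnn_step N net u (st u t)" by (simp add: st_def)

lemma st_Suc_net: "k < nnn \<Longrightarrow> st u (Suc t) k = (field N net k (activation u (st u t)) > th (decode k))"
  by (simp add: st_Suc step_net)

end

locale dnB = dnA +
  assumes lam2: "\<And>j. j < N \<Longrightarrow> 2 \<le> lam j"
    and widthq: "\<And>j. q \<Longrightarrow> j < N \<Longrightarrow> lam j \<le> 2 ^ Wd"
    and widthl: "\<And>j. \<not> q \<Longrightarrow> j < N \<Longrightarrow> lam j \<le> Wd"
    and tauN: "\<tau> \<le> N"
begin

lemma mod_succ: "2 \<le> l \<Longrightarrow> Suc t mod l = (if t mod l = l - 1 then 0 else t mod l + 1)"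
  by (auto simp: mod_Suc)

lemma ring_q:
  assumes qq: q and j: "j < N"
  shows "(\<forall>i<Wd. st u t (ringI j i) = bit (t mod lam j) i) \<and> (st u t (wrapI j) = (t mod lam j = lam j - 1))"
proof (induction t)
  case 0
  thus ?case using lam2[OF j] by simp
next
  case (Suc t)
  define n where "n = t mod lam j"
  have l2: "2 \<le> lam j" using lam2[OF j] .
  have nl: "n < lam j" using l2 by (simp add: n_def)
  have IHb: "\<And>i. i < Wd \<Longrightarrow> st u t (ringI j i) = bit n i" using Suc.IH by (simp add: n_def)
  have IHw: "st u t (wrapI j) = (n = lam j - 1)" using Suc.IH by (simp add: n_def)
  have nxt: "Suc t mod lam j = (if n = lam j - 1 then 0 else n + 1)" using mod_succ[OF l2] by (simp add: n_def)
  have rv: "rv (st u t) j = real n"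
  proof -
    have "rv (st u t) j = (\<Sum>i<Wd. 2 ^ i * ind (bit n i))"
      unfolding rv_def by (intro sum.cong refl) (simp add: IHb coef_def if_P[OF qq])
    also have "\<dots> = real n" using nl widthq[OF qq j] by (intro bin_expand) simp
    finally show ?thesis .
  qed
  have wrap: "st u (Suc t) (wrapI j) = (Suc t mod lam j = lam j - 1)"
  proof -
    have "st u (Suc t) (wrapI j) = (- ((real n) ^ 2) + 2 * (real (lam j) - 2) * real n > (real (lam j) - 2)^2 - 1/2)"
      using lt_wrap[OF j] by (simp add: st_Suc_net F_wrap_q[OF qq j] decode_wrap[OF j] if_P[OF qq] rv)
    also have "\<dots> = ((real n - (real (lam j) - 2))^2 < 1/2)"
    proof -
      have "(real n - (real (lam j) - 2))^2 = (real n)^2 - 2 * (real (lam j) - 2) * real n + (real (lam j) - 2)^2"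
        by (simp add: power2_eq_square algebra_simps)
      thus ?thesis by linarith
    qed
    also have "\<dots> = (real n = real (lam j) - 2)"
    proof
      assume a: "(real n - (real (lam j) - 2))^2 < 1/2"
      define d where "d = int n - (int (lam j) - 2)"
      have "(real_of_int d)^2 < 1/2" using a by (simp add: d_def)
      hence "d = 0" by (rule int_sq_small)
      thus "real n = real (lam j) - 2" by (simp add: d_def)
    qed simp
    also have "\<dots> = (n = lam j - 2)" using l2 by auto
    also have "\<dots> = (Suc t mod lam j = lam j - 1)" using nxt l2 nl by auto
    finally show ?thesis .
  qed
  have bits: "st u (Suc t) (ringI j i) = bit (Suc t mod lam j) i" if i: "i < Wd" for i
  proof -
    define A where "A = card {i'\<in>{..<i}. bit n i'}"
    have Ai: "A \<le> i" unfolding A_def by (rule card_le)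
    have sA: "(\<Sum>i'<i. ind (st u t (ringI j i'))) = real A"
    proof -
      have "(\<Sum>i'<i. ind (st u t (ringI j i'))) = (\<Sum>i'<i. ind (bit n i'))"
        using i IHb by (intro sum.cong refl) simp
      thus ?thesis by (simp add: sum_ind_card A_def)
    qed
    have "st u (Suc t) (ringI j i) = ((2 * ind (bit n i) - 1) * (real i - 1/2 - real A)
       + (real i - 1/2) - (2 * real Wd + 2) * ind (n = lam j - 1) > real i - 1/2)"
      using lt_ring[OF j i] by (simp add: st_Suc_net F_ring_q[OF qq j i] decode_ring[OF j i] if_P[OF qq] sA IHb[OF i] IHw)
    also have "\<dots> = bit (Suc t mod lam j) i"
    proof (cases "n = lam j - 1")
      case True
      have "(2 * ind (bit n i) - 1) * (real i - 1/2 - real A) \<le> 2 * real Wd + 2"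
        using Ai i by (cases "bit n i") auto
      thus ?thesis using True nxt by simp
    next
      case False
      have e: "Suc t mod lam j = n + 1" using False nxt by simp
      have "bit (n + 1) i = (bit n i \<noteq> (A = i))"
        unfolding bit_succ A_def card_all all_low_bits by (rule refl)
      moreover have "((2 * ind (bit n i) - 1) * (real i - 1/2 - real A) + (real i - 1/2) > real i - 1/2)
          = (bit n i \<noteq> (A = i))"
        using Ai by (cases "bit n i") auto
      ultimately show ?thesis using False e by simp
    qed
    finally show ?thesis .
  qed
  show ?case using wrap bits by blast
qed


lemma ring_l:
  assumes qq: "\<not> q" and j: "j < N"
  shows "\<forall>i<Wd. st u t (ringI j i) = (i \<noteq> 0 \<and> t mod lam j = i)"
proof (induction t)
  case 0 thus ?case by auto
next
  case (Suc t)
  define n where "n = t mod lam j"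
  have l2: "2 \<le> lam j" using lam2[OF j] .
  have lW: "lam j \<le> Wd" using widthl[OF qq j] .
  have nl: "n < lam j" using l2 by (simp add: n_def)
  have IH: "\<And>i. i < Wd \<Longrightarrow> st u t (ringI j i) = (i \<noteq> 0 \<and> n = i)" using Suc.IH by (simp add: n_def)
  have nxt: "Suc t mod lam j = (if n = lam j - 1 then 0 else n + 1)" using mod_succ[OF l2] by (simp add: n_def)
  show ?case
  proof (intro allI impI)
    fix i assume i: "i < Wd"
    show "st u (Suc t) (ringI j i) = (i \<noteq> 0 \<and> Suc t mod lam j = i)"
    proof (cases "i = 1")
      case True
      have W1: "1 < Wd" using l2 lW by simp
      have "(\<Sum>i'<Wd. (if 1 \<le> i' \<and> i' < lam j then -1 else 0) * ind (st u t (ringI j i')))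
          = (\<Sum>i'<Wd. if i' = n then (if 1 \<le> i' then -1 else 0) else 0)"
        using nl by (intro sum.cong refl) (auto simp: IH)
      also have "\<dots> = (if 1 \<le> n then -1 else 0)" using nl lW by (subst sum.delta) auto
      finally have f: "field N net (ringI j 1) (activation u (st u t)) = (if 1 \<le> n then -1 else 0)"
        using F_ring_l1[OF qq j W1] by simp
      have thv: "th (decode (ringI j 1)) = - 1/2"
        using decode_ring[OF j W1] by (simp add: if_not_P[OF qq])
      have "st u (Suc t) (ringI j 1) = (n = 0)"
        unfolding st_Suc_net[OF lt_ring[OF j W1]] f thv by (cases "n = 0") simp_all
      moreover have "(Suc t mod lam j = 1) = (n = 0)"
        using nxt l2 by (cases "n = lam j - 1") auto
      ultimately show ?thesis using True by simp
    next
      case i1: False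
      show ?thesis
      proof (cases "2 \<le> i \<and> i < lam j")
        case True
        have "st u (Suc t) (ringI j i) = (n = i - 1)"
          using lt_ring[OF j i] F_ring_l2[OF qq j i] True i1 i IH[of "i - 1"]
          by (simp add: st_Suc_net decode_ring[OF j i] if_not_P[OF qq] ind_def)
        moreover have "(Suc t mod lam j = i) = (n = i - 1)"
          using nxt l2 nl True by (cases "n = lam j - 1") auto
        ultimately show ?thesis using True by simp
      next
        case F2: False
        have "st u (Suc t) (ringI j i) = False"
          using lt_ring[OF j i] F_ring_l0[OF qq j i i1 F2] i1
          by (simp add: st_Suc_net decode_ring[OF j i] if_not_P[OF qq])
        moreover have "\<not> (i \<noteq> 0 \<and> Suc t mod lam j = i)"
          using F2 i1 l2 nl nxt by (cases "n = lam j - 1") auto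
        ultimately show ?thesis by simp
      qed
    qed
  qed
qed

lemma ring_val: "j < N \<Longrightarrow> rv (st u t) j = real (t mod lam j)"
proof (cases q)
  case True
  assume j: "j < N"
  have "rv (st u t) j = (\<Sum>i<Wd. 2 ^ i * ind (bit (t mod lam j) i))"
    unfolding rv_def using ring_q[OF True j] by (intro sum.cong refl) (simp add: coef_def if_P[OF True])
  also have "\<dots> = real (t mod lam j)"
  proof (rule bin_expand)
    have "t mod lam j < lam j" using lam2[OF j] by simp
    thus "t mod lam j < 2 ^ Wd" using widthq[OF True j] by linarith
  qed
  finally show ?thesis .
next
  case False
  assume j: "j < N"
  have "t mod lam j < lam j" using lam2[OF j] by simp
  hence lt: "t mod lam j < Wd" using widthl[OF False j] by linarith
  have "rv (st u t) j = (\<Sum>i<Wd. if i = t mod lam j then real i else 0)"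
    unfolding rv_def using ring_l[OF False j]
    by (intro sum.cong refl) (auto simp: coef_def if_not_P[OF False] ind_def)
  also have "\<dots> = real (t mod lam j)" using lt by (subst sum.delta) auto
  finally show ?thesis .
qed

end

lemma thr_div:
  fixes R a r c :: nat
  assumes "0 < R" "r < R"
  shows "(real (R * a + r) > real (R * c) - 1/2) \<longleftrightarrow> c \<le> a"
proof
  assume h: "real (R * a + r) > real (R * c) - 1/2"
  show "c \<le> a"
  proof (rule ccontr)
    assume "\<not> c \<le> a"
    hence "a + 1 \<le> c" by simp
    hence "R * (a + 1) \<le> R * c" by (rule mult_le_mono2)
    hence "R * a + r + 1 \<le> R * c" using assms by (simp add: algebra_simps)
    hence "real (R * a + r) + 1 \<le> real (R * c)" by (metis of_nat_1 of_nat_add of_nat_le_iff)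
    thus False using h by linarith
  qed
next
  assume "c \<le> a"
  hence "R * c \<le> R * a + r" by (simp add: add_increasing2)
  hence "real (R * c) \<le> real (R * a + r)" by (rule of_nat_mono)
  thus "real (R * a + r) > real (R * c) - 1/2" by linarith
qed

lemma real_gap: "(real b + 1/2 < real (a::nat)) = (b < a)"
proof (cases "b < a")
  case True
  hence "real (b + 1) \<le> real a" by (intro of_nat_mono) simp
  thus ?thesis using True by simp
next
  case False
  hence "real a \<le> real b" by simp
  thus ?thesis using False by simp
qed

lemma real_gap': "(1/2 < real (a::nat) - real b) = (b < a)"
  using real_gap[of b a] by linarith

lemma real_gap2: "(3/2 - real (\<tau>::nat) < 2 - real c) = (c \<le> \<tau>)"
  using real_gap[of c "\<tau> + 1"] by auto

context dnB begin

definition "mis u t = card {j\<in>{..<N}. u j \<noteq> t mod lam j}"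

lemma st_d: "st u t dI = (1 \<le> t)"
proof (cases t)
  case (Suc t')
  thus ?thesis using lt_d by (simp add: st_Suc_net F_d decode_d)
qed simp

lemma st_gt: "j < N \<Longrightarrow> st u (Suc t) (gtI j) = (u j < t mod lam j)"
  unfolding st_Suc_net[OF lt_gt] F_gt decode_gt th.simps ring_val by (rule real_gap')

lemma st_lt: "j < N \<Longrightarrow> st u (Suc t) (ltI j) = (t mod lam j < u j)"
  unfolding st_Suc_net[OF lt_lt] F_lt decode_lt th.simps ring_val by (rule real_gap')

lemma cnt_split: "cnt s = (\<Sum>j<N. ind (s (gtI j)) + ind (s (ltI j)))"
proof -
  have "cnt s = (\<Sum>i\<in>{0..<N}. ind (s (gtI 0 + i))) + (\<Sum>i\<in>{N..<N + N}. ind (s (gtI 0 + i)))"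
    unfolding cnt_def by (subst sum.atLeastLessThan_concat) (simp_all add: lessThan_atLeast0 mult_2)
  also have "(\<Sum>i\<in>{N..<N + N}. ind (s (gtI 0 + i))) = (\<Sum>j<N. ind (s (ltI j)))"
    by (simp add: shift_sum gtI_def ltI_def algebra_simps)
  also have "(\<Sum>i\<in>{0..<N}. ind (s (gtI 0 + i))) = (\<Sum>j<N. ind (s (gtI j)))"
    by (simp add: lessThan_atLeast0 gtI_def)
  finally show ?thesis by (simp add: sum.distrib)
qed

lemma cnt_Suc: "cnt (st u (Suc t)) = real (mis u t)"
proof -
  have "cnt (st u (Suc t)) = (\<Sum>j<N. ind (u j \<noteq> t mod lam j))"
    unfolding cnt_split by (intro sum.cong refl) (auto simp: st_gt st_lt ind_def)
  also have "\<dots> = (\<Sum>j\<in>{j\<in>{..<N}. u j \<noteq> t mod lam j}. 1)"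
    by (intro sum.mono_neutral_cong_right) (auto simp: ind_def)
  finally show ?thesis by (simp add: mis_def)
qed

lemma cnt_bounds: "0 \<le> cnt s" "cnt s \<le> 2 * real N"
proof -
  show "0 \<le> cnt s" unfolding cnt_def by (intro sum_nonneg) (simp add: ind_nonneg)
  have "cnt s \<le> (\<Sum>i<2 * N. 1)" unfolding cnt_def by (intro sum_mono) (simp add: ind_le1)
  thus "cnt s \<le> 2 * real N" by simp
qed

lemma st_f: "st u t fI = (\<exists>s. s + 2 \<le> t \<and> mis u s \<le> \<tau>)"
proof (induction t)
  case 0 thus ?case by simp
next
  case (Suc t)
  have fld: "st u (Suc t) fI = (- cnt (st u t) + 3 * MM * ind (st u t fI) + MM * ind (st u t dI) > MM - real \<tau> - 1/2)"
    using lt_f by (simp add: st_Suc_net F_f decode_f)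
  have MM: "MM = 2 * real N + 2" by (simp add: MM_def)
  have tN: "real \<tau> \<le> real N" using tauN by simp
  show ?case
  proof (cases "st u t fI")
    case True
    have "0 \<le> (2*real N + 2) * ind (st u t dI)" by (simp add: ind_nonneg)
    hence "st u (Suc t) fI" using True fld cnt_bounds[of "st u t"] MM tN by simp
    moreover have "\<exists>s. s + 2 \<le> Suc t \<and> mis u s \<le> \<tau>" using True Suc.IH le_SucI by blast
    ultimately show ?thesis by simp
  next
    case False
    show ?thesis
    proof (cases t)
      case 0
      have "\<not> st u (Suc t) fI" using fld 0 MM tN False by (simp add: cnt_def)
      thus ?thesis using 0 by simp
    next
      case (Suc t')
      have "st u (Suc t) fI = (mis u t' \<le> \<tau>)"
        using fld Suc False MM real_gap2[of \<tau> "mis u t'"] by (simp add: cnt_Suc st_d)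
      moreover have "(\<exists>s. s + 2 \<le> Suc t \<and> mis u s \<le> \<tau>) = (mis u t' \<le> \<tau>)"
        using False Suc.IH Suc by (auto simp: le_Suc_eq)
      ultimately show ?thesis by simp
    qed
  qed
qed

lemma st_p1: "\<not> st u (Suc 0) pI"
proof -
  have fld: "st u (Suc 0) pI = (- cnt (st u 0) - MM * ind (st u 0 fI) + MM * ind (st u 0 dI) > MM - real \<tau> - 1/2)"
    using lt_p by (simp add: st_Suc_net F_p decode_p)
  have MM: "MM = 2 * real N + 2" by (simp add: MM_def)
  have tN: "real \<tau> \<le> real N" using tauN by simp
  show ?thesis using fld MM tN by (simp add: cnt_def)
qed

lemma st_p: "st u (Suc (Suc t)) pI = (\<not> st u (Suc t) fI \<and> mis u t \<le> \<tau>)"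
proof -
  have fld: "st u (Suc (Suc t)) pI = (- cnt (st u (Suc t)) - MM * ind (st u (Suc t) fI) + MM * ind (st u (Suc t) dI) > MM - real \<tau> - 1/2)"
    using lt_p by (simp add: st_Suc_net F_p decode_p)
  have MM: "MM = 2 * real N + 2" by (simp add: MM_def)
  have tN: "real \<tau> \<le> real N" using tauN by simp
  have mN: "mis u t \<le> N" unfolding mis_def using card_mono[of "{..<N}" "{j \<in> {..<N}. u j \<noteq> t mod lam j}"] by auto
  show ?thesis using fld MM tN mN real_gap2[of \<tau> "mis u t"]
    by (cases "st u (Suc t) fI") (simp_all add: st_d cnt_Suc)
qed

lemma st_snap: "j < N \<Longrightarrow> i < Wd \<Longrightarrow> st u t (snapI j i) = (\<exists>s<t. st u s pI \<and> st u s (ringI j i))"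
proof (induction t)
  case 0 thus ?case by simp
next
  case (Suc t)
  have "st u (Suc t) (snapI j i) = (2 * ind (st u t (snapI j i)) + ind (st u t (ringI j i)) + ind (st u t pI) > 3/2)"
    using lt_snap[OF Suc.prems] by (simp add: st_Suc_net F_snap[OF Suc.prems] decode_snap[OF Suc.prems])
  also have "\<dots> = (st u t (snapI j i) \<or> (st u t (ringI j i) \<and> st u t pI))"
    by (simp add: ind_def)
  finally show ?case using Suc.IH[OF Suc.prems] by (auto simp: less_Suc_eq)
qed

end

lemma bin_expand_nat: "(n::nat) < 2 ^ k \<Longrightarrow> (\<Sum>i<k. if bit n i then 2 ^ i else 0) = n"
proof -
  assume n: "n < 2 ^ k"
  have "real (\<Sum>i<k. if bit n i then 2 ^ i else 0) = (\<Sum>i<k. 2 ^ i * ind (bit n i))"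
    unfolding of_nat_sum by (intro sum.cong refl) (simp add: ind_def)
  also have "\<dots> = real n" using n by (rule bin_expand)
  finally show ?thesis by (simp only: of_nat_eq_iff)
qed

lemma crt_unique:
  fixes lam :: "nat \<Rightarrow> nat"
  assumes copr: "\<And>i j. i < K \<Longrightarrow> j < K \<Longrightarrow> i \<noteq> j \<Longrightarrow> coprime (lam i) (lam j)"
    and a: "a < (\<Prod>i<K. lam i)" and b: "b < (\<Prod>i<K. lam i)"
    and eq: "\<And>i. i < K \<Longrightarrow> a mod lam i = b mod lam i"
  shows "a = b"
proof (rule ccontr)
  assume ne: "a \<noteq> b"
  define d where "d = max a b - min a b"
  have "prod lam {..<K} dvd d"
  proof (rule prod_dvd_coprime)
    show "finite {..<K}" by simp
    show "coprime (lam i) (lam j)" if "i \<in> {..<K}" "j \<in> {..<K}" "i \<noteq> j" for i j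
      using copr that by auto
    show "lam i dvd d" if "i \<in> {..<K}" for i
    proof -
      have "max a b mod lam i = min a b mod lam i" using eq[of i] that by (auto simp: max_def min_def)
      thus ?thesis unfolding d_def by (simp add: mod_eq_dvd_iff_nat[symmetric])
    qed
  qed
  moreover have "0 < d" using ne by (simp add: d_def)
  ultimately have "prod lam {..<K} \<le> d" by (rule dvd_imp_le)
  moreover have "d < prod lam {..<K}" using a b by (simp add: d_def)
  ultimately show False by simp
qed

locale dnC = dnB +
  assumes copr: "\<And>i j. i < K \<Longrightarrow> j < K \<Longrightarrow> i \<noteq> j \<Longrightarrow> coprime (lam i) (lam j)"
    and Emod1: "\<And>i. i < K \<Longrightarrow> E i mod lam i = 1"
    and Emod0: "\<And>i i'. i < K \<Longrightarrow> i' < K \<Longrightarrow> i' \<noteq> i \<Longrightarrow> E i mod lam i' = 0"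
    and R2: "2 \<le> R"
    and Vbound: "(\<Sum>i<K. E i * lam i) + R \<le> 2 ^ nq * R"
    and Rm: "R \<le> 2 ^ m"

locale dnRun = dnC +
  fixes u :: "nat \<Rightarrow> nat" and x :: nat
  assumes xR: "x < R" and xm: "mis u x \<le> \<tau>" and xmin: "\<And>y. y < x \<Longrightarrow> \<tau> < mis u y"
begin

lemma qI_add: "qI 0 + b = qI b" by (simp add: qI_def)
lemma xI_add: "xI 0 + b = xI b" by (simp add: xI_def)

lemma p_iff: "st u t pI = (t = x + 2)"
proof (cases t)
  case 0 thus ?thesis by simp
next
  case (Suc t1)
  show ?thesis
  proof (cases t1)
    case 0 thus ?thesis using Suc st_p1 by simp
  next
    case (Suc t')
    have f: "st u (Suc t') fI = (x < t')"
    proof -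
      have "st u (Suc t') fI = (\<exists>s. s < t' \<and> mis u s \<le> \<tau>)" by (auto simp: st_f Suc_le_eq)
      also have "\<dots> = (x < t')"
      proof
        assume "\<exists>s. s < t' \<and> mis u s \<le> \<tau>"
        then obtain s where s: "s < t'" "mis u s \<le> \<tau>" by blast
        have "\<not> s < x" using xmin[of s] s by linarith
        thus "x < t'" using s by linarith
      next
        assume "x < t'" thus "\<exists>s. s < t' \<and> mis u s \<le> \<tau>" using xm by blast
      qed
      finally show ?thesis .
    qed
    have "st u t pI = (\<not> x < t' \<and> mis u t' \<le> \<tau>)" using \<open>t = Suc t1\<close> Suc st_p f by simp
    also have "\<dots> = (t' = x)" using xm xmin by (metis leD linorder_neqE_nat)
    finally show ?thesis using \<open>t = Suc t1\<close> Suc by simp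
  qed
qed

lemma snap_val: "x + 2 < t \<Longrightarrow> j < N \<Longrightarrow> sv (st u t) j = real ((x + 2) mod lam j)"
proof -
  assume t: "x + 2 < t" and j: "j < N"
  have "sv (st u t) j = rv (st u (x + 2)) j"
    unfolding sv_def rv_def using t j by (intro sum.cong refl) (simp add: st_snap p_iff)
  thus ?thesis using j by (simp add: ring_val)
qed

lemma SV_val: "x + 2 < t \<Longrightarrow> SV (st u t) = (\<Sum>i<K. real (E i) * real ((x + 2) mod lam i))"
proof -
  assume t: "x + 2 < t"
  have "SV (st u t) = (\<Sum>i<K. \<Sum>k<Wd. real (E i) * (coef q k * ind (st u t (snapI i k))))"
    unfolding SV_def sum_split_blocks using Wd_pos
    by (intro sum.cong refl) (simp add: snapI_def algebra_simps)
  also have "\<dots> = (\<Sum>i<K. real (E i) * sv (st u t) i)"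
    by (simp add: sv_def sum_distrib_left)
  also have "\<dots> = (\<Sum>i<K. real (E i) * real ((x + 2) mod lam i))"
    using t KN by (intro sum.cong refl) (simp add: snap_val)
  finally show ?thesis .
qed

definition "S = (\<Sum>i<K. E i * ((x + 2) mod lam i))"
definition "V = S + R - 2"
definition "qq = V div R"
definition "rr = V mod R"

lemma SV_V: "x + 2 < t \<Longrightarrow> SV (st u t) = real V - (real R - 2)"
  using SV_val R2 by (simp add: V_def S_def of_nat_diff)

lemma V_lt: "V < 2 ^ nq * R"
proof -
  have "S \<le> (\<Sum>i<K. E i * lam i)"
    unfolding S_def using KN lam2
    by (intro sum_mono mult_le_mono2) (metis less_imp_le_nat mod_less_divisor lessThan_iff
        less_le_trans not_numeral_le_zero not_gr_zero order.strict_trans1)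
  thus ?thesis using Vbound R2 by (simp add: V_def)
qed

lemma qq_lt: "qq < 2 ^ nq"
  using V_lt R2 by (simp add: qq_def div_less_iff_less_mult)

lemma rr_lt: "rr < 2 ^ m"
  using Rm R2 by (simp add: rr_def) (meson less_le_trans mod_less_divisor zero_less_numeral order.strict_trans2)

lemma V_eq: "V = R * qq + rr" by (simp add: qq_def rr_def)

lemma q_val: "b < nq \<Longrightarrow> x + 3 + (nq - b) \<le> t \<Longrightarrow> st u t (qI b) = bit qq b"
proof (induction "nq - b" arbitrary: b t rule: less_induct)
  case less
  obtain t' where t: "t = Suc t'" using less.prems by (cases t) auto
  have t': "x + 2 + (nq - b) \<le> t'" using less.prems t by simp
  have IH: "st u t' (qI b') = bit qq b'" if "b < b'" "b' < nq" for b'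
    using less.hyps[of b' t'] that t' less.prems by simp
  have sum: "(\<Sum>b'<nq. (if b < b' then - (real R * 2 ^ b') else 0) * ind (st u t' (qI 0 + b')))
      = - real R * (\<Sum>b'<nq. if b < b' then 2 ^ b' * ind (bit qq b') else 0)"
  proof -
    have "(\<Sum>b'<nq. (if b < b' then - (real R * 2 ^ b') else 0) * ind (st u t' (qI 0 + b')))
      = (\<Sum>b'<nq. - real R * (if b < b' then 2 ^ b' * ind (bit qq b') else 0))"
      by (intro sum.cong refl) (auto simp: IH qI_add)
    thus ?thesis by (simp add: sum_distrib_left)
  qed
  have hs: "(\<Sum>b'<nq. if b < b' then 2 ^ b' * ind (bit qq b') else 0) = 2 ^ (b + 1) * real (qq div 2 ^ (b + 1))"
    using high_sum[OF qq_lt less.prems(1)] .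
  have sv: "SV (st u t') = real V - (real R - 2)" using t' less.prems(1) by (intro SV_V) simp
  have fv: "field N net (qI b) (activation u (st u t')) =
      (real V - real R * (2 ^ (b + 1) * real (qq div 2 ^ (b + 1)))) - (real R - 2)"
    unfolding F_q[OF less.prems(1)] sum hs sv by simp
  have "st u t (qI b) = ((real V - real R * (2 ^ (b + 1) * real (qq div 2 ^ (b + 1)))) - (real R - 2)
       > (real R * 2 ^ b - 1/2) - (real R - 2))"
    unfolding t st_Suc_net[OF lt_q[OF less.prems(1)]] fv decode_q[OF less.prems(1)] th.simps by simp
  also have "\<dots> = (real V - real R * (2 ^ (b + 1) * real (qq div 2 ^ (b + 1))) > real R * 2 ^ b - 1/2)"
    by (intro iffI) linarith+
  also have "real V - real R * (2 ^ (b + 1) * real (qq div 2 ^ (b + 1))) = real (R * (qq mod 2 ^ (b + 1)) + rr)"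
  proof -
    define A where "A = qq div 2 ^ (b + 1)"
    define B where "B = qq mod 2 ^ (b + 1)"
    have qe: "qq = 2 ^ (b + 1) * A + B" by (simp add: A_def B_def)
    have "V = R * (2 ^ (b + 1) * A) + (R * B + rr)" using V_eq qe by (simp add: algebra_simps)
    hence "real V = real R * (2 ^ (b + 1) * real A) + real (R * B + rr)"
      by (simp only: of_nat_add of_nat_mult of_nat_power of_nat_numeral)
    thus ?thesis by (simp add: A_def B_def)
  qed
  also have "real R * 2 ^ b = real (R * 2 ^ b)" by simp
  also have "(real (R * (qq mod 2 ^ (b + 1)) + rr) > real (R * 2 ^ b) - 1/2) = (2 ^ b \<le> qq mod 2 ^ (b + 1))"
    using R2 by (intro thr_div) (simp_all add: rr_def)
  also have "\<dots> = bit qq b" by (rule mod_ge_bit)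
  finally show ?case .
qed


lemma x_val: "b < m \<Longrightarrow> x + 3 + nq + (m - b) \<le> t \<Longrightarrow> st u t (xI b) = bit rr b"
proof (induction "m - b" arbitrary: b t rule: less_induct)
  case less
  obtain t' where t: "t = Suc t'" using less.prems by (cases t) auto
  have t': "x + 2 + nq + (m - b) \<le> t'" using less.prems t by simp
  have IH: "st u t' (xI b') = bit rr b'" if "b < b'" "b' < m" for b'
    using less.hyps[of b' t'] that t' less.prems by simp
  have Q: "st u t' (qI b') = bit qq b'" if "b' < nq" for b'
    using t' less.prems that by (intro q_val) auto
  have sumq: "(\<Sum>b'<nq. - (real R * 2 ^ b') * ind (st u t' (qI 0 + b'))) = - real R * real qq"
  proof -
    have "(\<Sum>b'<nq. - (real R * 2 ^ b') * ind (st u t' (qI 0 + b')))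
      = (\<Sum>b'<nq. - real R * (2 ^ b' * ind (bit qq b')))"
      by (intro sum.cong refl) (simp add: Q qI_add)
    also have "\<dots> = - real R * (\<Sum>b'<nq. 2 ^ b' * ind (bit qq b'))" by (simp add: sum_distrib_left)
    also have "\<dots> = - real R * real qq" using qq_lt by (simp add: bin_expand)
    finally show ?thesis .
  qed
  have sumx: "(\<Sum>b'<m. (if b < b' then - (2 ^ b') else 0) * ind (st u t' (xI 0 + b')))
      = - (2 ^ (b + 1) * real (rr div 2 ^ (b + 1)))"
  proof -
    have "(\<Sum>b'<m. (if b < b' then - (2 ^ b') else 0) * ind (st u t' (xI 0 + b')))
      = (\<Sum>b'<m. - (if b < b' then 2 ^ b' * ind (bit rr b') else 0))"
      by (intro sum.cong refl) (auto simp: IH xI_add)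
    also have "\<dots> = - (\<Sum>b'<m. if b < b' then 2 ^ b' * ind (bit rr b') else 0)" by (simp add: sum_negf)
    also have "\<dots> = - (2 ^ (b + 1) * real (rr div 2 ^ (b + 1)))"
      using high_sum[OF rr_lt less.prems(1)] by simp
    finally show ?thesis .
  qed
  have sv: "SV (st u t') = real V - (real R - 2)" using t' less.prems(1) by (intro SV_V) simp
  have VR: "real V - real R * real qq = real rr"
  proof -
    have "real V = real R * real qq + real rr" using V_eq by (simp only: of_nat_add of_nat_mult)
    thus ?thesis by simp
  qed
  have fv: "field N net (xI b) (activation u (st u t')) =
      (real rr - 2 ^ (b + 1) * real (rr div 2 ^ (b + 1))) - (real R - 2)"
    unfolding F_x[OF less.prems(1)] sumq sumx sv using VR by simp
  have "st u t (xI b) = ((real rr - 2 ^ (b + 1) * real (rr div 2 ^ (b + 1))) - (real R - 2)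
       > (2 ^ b - 1/2) - (real R - 2))"
    unfolding t st_Suc_net[OF lt_x[OF less.prems(1)]] fv decode_x[OF less.prems(1)] th.simps by simp
  also have "\<dots> = (real rr - 2 ^ (b + 1) * real (rr div 2 ^ (b + 1)) > 2 ^ b - 1/2)"
    by (intro iffI) linarith+
  also have "real rr - 2 ^ (b + 1) * real (rr div 2 ^ (b + 1)) = real (1 * (rr mod 2 ^ (b + 1)) + 0)"
  proof -
    define A where "A = rr div 2 ^ (b + 1)"
    define B where "B = rr mod 2 ^ (b + 1)"
    have "rr = 2 ^ (b + 1) * A + B" by (simp add: A_def B_def)
    hence "real rr = 2 ^ (b + 1) * real A + real B"
      by (simp only: of_nat_add of_nat_mult of_nat_power of_nat_numeral)
    thus ?thesis by (simp add: A_def B_def)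
  qed
  also have "(2::real) ^ b = real (1 * 2 ^ b)" by simp
  also have "(real (1 * (rr mod 2 ^ (b + 1)) + 0) > real (1 * 2 ^ b) - 1/2) = (2 ^ b \<le> rr mod 2 ^ (b + 1))"
    by (intro thr_div) simp_all
  also have "\<dots> = bit rr b" by (rule mod_ge_bit)
  finally show ?case .
qed

lemma output_rr: "bnn_output N net u = rr"
proof -
  have run: "bnn_run N net u = st u (R + nq + m + 3)"
    by (simp add: bnn_run_def st_def net_def)
  have "bnn_output N net u = (\<Sum>j<m. if st u (R + nq + m + 3) (xI j) then 2 ^ j else 0)"
    unfolding bnn_output_def run by (simp add: net_def)
  also have "\<dots> = (\<Sum>j<m. if bit rr j then 2 ^ j else 0)"
    using xR by (intro sum.cong refl) (simp add: x_val)
  also have "\<dots> = rr" using rr_lt by (rule bin_expand_nat)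
  finally show ?thesis .
qed

lemma S_mod: "i < K \<Longrightarrow> S mod lam i = (x + 2) mod lam i"
proof -
  assume i: "i < K"
  define y where "y i' = (x + 2) mod lam i'" for i'
  have "S = E i * y i + (\<Sum>i'\<in>{..<K} - {i}. E i' * y i')"
    unfolding S_def y_def using i by (simp add: sum.remove)
  moreover have "lam i dvd (\<Sum>i'\<in>{..<K} - {i}. E i' * y i')"
    by (intro dvd_sum dvd_mult2) (use Emod0 i in \<open>auto simp: mod_eq_0_iff_dvd\<close>)
  ultimately have "S mod lam i = (E i * y i) mod lam i" by (simp add: mod_add_right_eq[symmetric])
  also have "\<dots> = ((E i mod lam i) * y i) mod lam i" by (simp add: mod_mult_left_eq)
  also have "\<dots> = (x + 2) mod lam i" using Emod1[OF i] by (simp add: y_def)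
  finally show ?thesis .
qed

lemma rr_x: "rr = x"
proof (rule crt_unique[OF copr])
  show "rr < (\<Prod>i<K. lam i)" using R2 by (simp add: rr_def R_def[symmetric])
  show "x < (\<Prod>i<K. lam i)" using xR by (simp add: R_def)
  fix i assume i: "i < K"
  have dvdR: "lam i dvd R" unfolding R_def using i by (intro dvd_prodI) auto
  have "V + 2 = S + R" using R2 unfolding V_def by linarith
  hence "(V + 2) mod lam i = (S + R) mod lam i" by (simp only:)
  also have "\<dots> = S mod lam i" using dvdR by (simp add: mod_add_right_eq[symmetric])
  also have "\<dots> = (x + 2) mod lam i" using S_mod[OF i] .
  finally have e: "(V + 2) mod lam i = (x + 2) mod lam i" .
  have "V mod lam i = x mod lam i"
  proof -
    have "(int V + 2) mod int (lam i) = (int x + 2) mod int (lam i)"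
      using e by (metis of_nat_add of_nat_numeral zmod_int)
    hence "((int V + 2) - 2) mod int (lam i) = ((int x + 2) - 2) mod int (lam i)"
      by (rule mod_diff_cong) simp
    hence "int V mod int (lam i) = int x mod int (lam i)" by simp
    thus ?thesis by (metis of_nat_eq_iff zmod_int)
  qed
  thus "rr mod lam i = x mod lam i" using dvdR by (simp add: rr_def mod_mod_cancel)
qed

theorem output_correct: "bnn_output N net u = x"
  using output_rr rr_x by simp

end

definition Bof :: "(nat \<Rightarrow> nat) \<Rightarrow> nat \<Rightarrow> nat" where
  "Bof L N = (LEAST b. L (N - 1) < 2 ^ b)"

lemma Bof_lt: "L (N - 1) < 2 ^ Bof L N"
  unfolding Bof_def by (rule LeastI[of _ "L (N - 1)"]) simp

lemma Bof_ge: assumes L1: "1 \<le> L (N - 1)" shows "2 ^ (Bof L N - 1) \<le> L (N - 1)"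
proof (cases "Bof L N = 0")
  case True
  thus ?thesis using L1 by simp
next
  case False
  hence "\<not> L (N - 1) < 2 ^ (Bof L N - 1)"
    unfolding Bof_def by (intro not_less_Least) simp
  thus ?thesis by simp
qed

lemma Bof_pos: "1 \<le> L (N - 1) \<Longrightarrow> 1 \<le> Bof L N"
  using Bof_lt[of L N] by (cases "Bof L N") auto

lemma Bof_le_L: "1 \<le> L (N - 1) \<Longrightarrow> Bof L N \<le> L (N - 1)"
proof -
  assume "1 \<le> L (N - 1)"
  have "Bof L N - 1 < 2 ^ (Bof L N - 1)" by (rule less_exp)
  hence "Bof L N \<le> 2 ^ (Bof L N - 1)" by linarith
  thus ?thesis using Bof_ge[of L N] \<open>1 \<le> L (N - 1)\<close> by linarith
qed

definition Eof :: "(nat \<Rightarrow> nat) \<Rightarrow> nat \<Rightarrow> nat \<Rightarrow> nat" where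
  "Eof L KK i = (SOME e. e mod L i = 1 \<and> (\<forall>i'<KK. i' \<noteq> i \<longrightarrow> e mod L i' = 0)) mod (\<Prod>i<KK. L i)"

lemma crt_basis_ex:
  fixes L :: "nat \<Rightarrow> nat"
  assumes copr: "\<And>i j. i < KK \<Longrightarrow> j < KK \<Longrightarrow> i \<noteq> j \<Longrightarrow> coprime (L i) (L j)"
    and L2: "\<And>i. i < KK \<Longrightarrow> 2 \<le> L i" and i: "i < KK"
  shows "\<exists>e. e mod L i = 1 \<and> (\<forall>i'<KK. i' \<noteq> i \<longrightarrow> e mod L i' = 0)"
proof -
  define P where "P = (\<Prod>i'\<in>{..<KK} - {i}. L i')"
  have Lp: "\<And>i. i < KK \<Longrightarrow> 0 < L i" using L2 by (meson less_le_trans pos2)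
  have P0: "P \<noteq> 0" unfolding P_def using Lp by (simp add: prod_zero_iff)
  have cp: "coprime P (L i)" unfolding P_def
    by (rule prod_coprime_left) (use copr i in auto)
  obtain a y where "P * a = L i * y + gcd P (L i)" using bezout_nat[OF P0] by blast
  hence pa: "P * a = L i * y + 1" using cp by simp
  show ?thesis
  proof (intro exI conjI allI impI)
    have "(1 + L i * y) mod L i = 1 mod L i" by (rule mod_mult_self2)
    thus "P * a mod L i = 1" using pa L2[OF i] by (simp add: add.commute)
    fix i' assume "i' < KK" "i' \<noteq> i"
    hence "L i' dvd P" unfolding P_def by (intro dvd_prodI) auto
    thus "P * a mod L i' = 0" by simp
  qed
qed

lemma Eof_props:
  fixes L :: "nat \<Rightarrow> nat"
  assumes copr: "\<And>i j. i < KK \<Longrightarrow> j < KK \<Longrightarrow> i \<noteq> j \<Longrightarrow> coprime (L i) (L j)"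
    and L2: "\<And>i. i < KK \<Longrightarrow> 2 \<le> L i" and i: "i < KK"
  shows "Eof L KK i mod L i = 1" "\<And>i'. i' < KK \<Longrightarrow> i' \<noteq> i \<Longrightarrow> Eof L KK i mod L i' = 0"
    "Eof L KK i < (\<Prod>i<KK. L i)"
proof -
  define e where "e = (SOME e. e mod L i = 1 \<and> (\<forall>i'<KK. i' \<noteq> i \<longrightarrow> e mod L i' = 0))"
  have e: "e mod L i = 1 \<and> (\<forall>i'<KK. i' \<noteq> i \<longrightarrow> e mod L i' = 0)"
    unfolding e_def by (rule someI_ex[OF crt_basis_ex[OF copr L2 i]]) auto
  have dv: "L j dvd (\<Prod>i<KK. L i)" if "j < KK" for j using that by (intro dvd_prodI) auto
  have E: "Eof L KK i = e mod (\<Prod>i<KK. L i)" by (simp add: Eof_def e_def)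
  show "Eof L KK i mod L i = 1" using e dv[OF i] by (simp add: E mod_mod_cancel)
  show "Eof L KK i mod L i' = 0" if "i' < KK" "i' \<noteq> i" for i'
    using e dv[OF that(1)] that by (simp add: E mod_mod_cancel)
  have Lp: "\<And>i. i < KK \<Longrightarrow> 0 < L i" using L2 by (meson less_le_trans pos2)
  have "(\<Prod>i<KK. L i) > 0" using Lp by (simp add: prod_pos)
  thus "Eof L KK i < (\<Prod>i<KK. L i)" by (simp add: E)
qed

definition "Wof q L N = (if q then Bof L N else L (N - 1))"
definition "netq q N L KK = dn.net q N L KK (Wof q L N) (2 * Bof L N) (KK * Bof L N) (Eof L KK) ((N - KK) div 2)"

lemma incr_ge:
  fixes L :: "nat \<Rightarrow> nat"
  assumes incr: "\<And>i j. i < j \<Longrightarrow> j < N \<Longrightarrow> L i < L j" and L0: "2 \<le> L 0"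
  shows "i < N \<Longrightarrow> i + 2 \<le> L i"
proof (induction i)
  case 0 thus ?case using L0 by simp
next
  case (Suc i)
  thus ?case using incr[of i "Suc i"] by simp
qed

lemma inst_dnC:
  fixes L :: "nat \<Rightarrow> nat"
  assumes N1: "1 \<le> N" and KK: "1 \<le> KK" "KK \<le> N"
    and incr: "\<And>i j. i < j \<Longrightarrow> j < N \<Longrightarrow> L i < L j"
    and copr: "\<And>i j. i < N \<Longrightarrow> j < N \<Longrightarrow> i \<noteq> j \<Longrightarrow> coprime (L i) (L j)"
    and L0: "2 \<le> L 0"
  shows "dnC q N L KK (Wof q L N) (2 * Bof L N) (KK * Bof L N) (Eof L KK) ((N - KK) div 2)"
proof -
  define B where "B = Bof L N"
  define Lm where "Lm = L (N - 1)"
  have Lge: "i < N \<Longrightarrow> i + 2 \<le> L i" for i using incr_ge[of N L, OF incr L0] by blast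
  have L2: "j < N \<Longrightarrow> 2 \<le> L j" for j using Lge[of j] by simp
  have LN: "L j \<le> Lm" if j: "j < N" for j
  proof (cases "j = N - 1")
    case True thus ?thesis by (simp add: Lm_def)
  next
    case False
    hence "j < N - 1" using j by linarith
    thus ?thesis unfolding Lm_def using incr[of j "N - 1"] N1 by simp
  qed
  have NLm: "N \<le> Lm" using Lge[of "N - 1"] N1 by (simp add: Lm_def)
  have Lm1: "1 \<le> Lm" using NLm N1 by simp
  have LmB: "Lm < 2 ^ B" using Bof_lt by (simp add: Lm_def B_def)
  have B1: "1 \<le> B" using Bof_pos[of L N] Lm1 by (simp add: Lm_def B_def)
  define R where "R = (\<Prod>i<KK. L i)"
  have R2: "2 \<le> R"
  proof -
    have Lmono: "L i \<le> L j" if "i \<le> j" "j < N" for i j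
      using incr[of i j] that by (cases "i = j") auto
    have Lpos: "0 < L i" if "i < N" for i using L2[OF that] by simp
    have "(\<Prod>i<1. L i) \<le> prod L {..<KK}"
      by (rule prod_ge_first[OF Lmono Lpos]) (use KK in auto)
    thus ?thesis using L0 by (simp add: R_def)
  qed
  have Eprops: "Eof L KK i mod L i = 1" "\<And>i'. i' < KK \<Longrightarrow> i' \<noteq> i \<Longrightarrow> Eof L KK i mod L i' = 0"
      "Eof L KK i < R" if "i < KK" for i
    using Eof_props[of KK L i] copr L2 KK that by (auto simp: R_def)
  have Vb: "(\<Sum>i<KK. Eof L KK i * L i) + R \<le> 2 ^ (2 * B) * R"
  proof -
    have "(\<Sum>i<KK. Eof L KK i * L i) \<le> (\<Sum>i<KK. R * Lm)"
      using Eprops(3) LN KK by (intro sum_mono mult_mono) (auto intro: less_imp_le)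
    also have "\<dots> = R * (KK * Lm)" by simp
    finally have "(\<Sum>i<KK. Eof L KK i * L i) + R \<le> R * (KK * Lm + 1)" by simp
    also have "KK * Lm < 2 ^ B * 2 ^ B"
      using KK NLm LmB by (intro mult_strict_mono) auto
    hence "R * (KK * Lm + 1) \<le> R * (2 ^ B * 2 ^ B)" by (intro mult_le_mono2) simp
    also have "\<dots> = 2 ^ (2 * B) * R" by (simp add: power_add[symmetric] mult_2 mult.commute)
    finally show ?thesis .
  qed
  have Rm: "R \<le> 2 ^ (KK * B)"
  proof -
    have "R \<le> (\<Prod>i<KK. 2 ^ B)" unfolding R_def using LN LmB KK
    proof (intro prod_mono conjI)
      fix i assume "i \<in> {..<KK}"
      hence "L i \<le> Lm" using LN KK by simp
      thus "L i \<le> 2 ^ B" using LmB by linarith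
    qed simp
    also have "\<dots> = 2 ^ (KK * B)" by (simp add: power_mult[symmetric] mult.commute)
    finally show ?thesis .
  qed
  show ?thesis
  proof (unfold_locales)
    show "0 < Wof q L N" using B1 Lm1 L2[of "N - 1"] N1 by (simp add: Wof_def B_def Lm_def)
    show "KK \<le> N" using KK by simp
    show "2 \<le> L j" if "j < N" for j using L2 that .
    show "L j \<le> 2 ^ Wof q L N" if "q" "j < N" for j
      using LN[OF that(2)] LmB that(1) by (simp add: Wof_def B_def)
    show "L j \<le> Wof q L N" if "\<not> q" "j < N" for j
      using LN[OF that(2)] that(1) by (simp add: Wof_def Lm_def)
    show "(N - KK) div 2 \<le> N" by simp
    show "coprime (L i) (L j)" if "i < KK" "j < KK" "i \<noteq> j" for i j
      using copr that KK by simp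
    show "Eof L KK i mod L i = 1" if "i < KK" for i using Eprops that by blast
    show "Eof L KK i mod L i' = 0" if "i < KK" "i' < KK" "i' \<noteq> i" for i i' using Eprops that by blast
    show "2 \<le> dn.R L KK" using R2 by (simp add: dn.R_def R_def)
    show "(\<Sum>i<KK. Eof L KK i * L i) + dn.R L KK \<le> 2 ^ (2 * Bof L N) * dn.R L KK"
      using Vb by (simp add: dn.R_def R_def B_def)
    show "dn.R L KK \<le> 2 ^ (KK * Bof L N)" using Rm by (simp add: dn.R_def R_def B_def)
  qed
qed

lemma netq_nn: "nn (netq q N L KK) = 2 * N * Wof q L N + 3 * N + 3 + 2 * Bof L N + KK * Bof L N"
  by (simp add: netq_def dn.nn_net dn.nnn_def dn.dI_def)

lemma netq_linear: "linear_bnn (netq False N L KK)"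
  unfolding netq_def by (rule dn.linear) simp

lemma inst_success:
  fixes L :: "nat \<Rightarrow> nat" and eps :: real
  assumes N1: "1 \<le> N" and KK: "1 \<le> KK" "KK \<le> N"
    and incr: "\<And>i j. i < j \<Longrightarrow> j < N \<Longrightarrow> L i < L j"
    and copr: "\<And>i j. i < N \<Longrightarrow> j < N \<Longrightarrow> i \<noteq> j \<Longrightarrow> coprime (L i) (L j)"
    and L0: "2 \<le> L 0" and e: "0 \<le> eps" "eps \<le> 1"
    and t: "real ((N - KK) div 2) + 1 - eps * N \<ge> 0"
    and x: "x < (\<Prod>i<KK. L i)"
  shows "success_prob eps N L (netq q N L KK) x \<ge> 1 - exp (-2 * (real ((N - KK) div 2) + 1 - eps * N)^2 / N)"
proof -
  define \<tau> where "\<tau> = (N - KK) div 2"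
  interpret C: dnC q N L KK "Wof q L N" "2 * Bof L N" "KK * Bof L N" "Eof L KK" \<tau>
    unfolding \<tau>_def by (rule inst_dnC[of N KK L, OF N1 KK incr copr L0])
  have pos: "\<And>i. i < N \<Longrightarrow> 0 < L i" using C.lam2 by (meson less_le_trans pos2)
  have net: "netq q N L KK = C.net" by (simp add: netq_def \<tau>_def)
  have sub: "{u. \<tau> \<ge> card {j\<in>{..<N}. u j \<noteq> x mod L j}} \<subseteq> {u. bnn_output N (netq q N L KK) u = x}"
  proof
    fix u assume "u \<in> {u. \<tau> \<ge> card {j\<in>{..<N}. u j \<noteq> x mod L j}}"
    hence err: "card {j\<in>{..<N}. u j \<noteq> x mod L j} \<le> \<tau>" by simp
    have xmin: "\<tau> < C.mis u y" if "y < x" for y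
      unfolding C.mis_def
      by (rule decode_unique[OF incr pos copr that x _ _ err]) (use KK in \<open>auto simp: \<tau>_def\<close>)
    interpret Rn: dnRun q N L KK "Wof q L N" "2 * Bof L N" "KK * Bof L N" "Eof L KK" \<tau> u x
      by (unfold_locales) (use x err xmin in \<open>auto simp: C.R_def C.mis_def\<close>)
    show "u \<in> {u. bnn_output N (netq q N L KK) u = x}" using Rn.output_correct net by simp
  qed
  have "success_prob eps N L (netq q N L KK) x \<ge> measure_pmf.prob (noisy_code eps N L x) {u. \<tau> \<ge> card {j\<in>{..<N}. u j \<noteq> x mod L j}}"
    unfolding success_prob_def by (intro measure_pmf.finite_measure_mono sub) simp
  moreover have "measure_pmf.prob (noisy_code eps N L x) {u. \<tau> \<ge> card {j\<in>{..<N}. u j \<noteq> x mod L j}}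
      = 1 - measure_pmf.prob (noisy_code eps N L x) {u. \<tau> < card {j\<in>{..<N}. u j \<noteq> x mod L j}}"
  proof -
    have "{u. \<tau> \<ge> card {j\<in>{..<N}. u j \<noteq> x mod L j}} = UNIV - {u. \<tau> < card {j\<in>{..<N}. u j \<noteq> x mod L j}}"
      by auto
    thus ?thesis
      using measure_pmf.prob_compl[of "{u. \<tau> < card {j\<in>{..<N}. u j \<noteq> x mod L j}}" "noisy_code eps N L x"]
      by simp
  qed
  moreover have "measure_pmf.prob (noisy_code eps N L x) {u. \<tau> < card {j\<in>{..<N}. u j \<noteq> x mod L j}}
      \<le> exp (-2 * (real \<tau> + 1 - eps * N)^2 / N)"
    by (rule noisy_tail) (use e pos N1 t in \<open>auto simp: \<tau>_def\<close>)
  ultimately show ?thesis by (simp add: \<tau>_def)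
qed

lemma ln_ge1: "3 \<le> (x::real) \<Longrightarrow> 1 \<le> ln x"
  using exp_le by (subst ln_ge_iff) auto

lemma B_bound:
  fixes Lm B :: nat and C1 c x :: real
  assumes L1: "1 \<le> Lm" and BL: "2 ^ (B - 1) \<le> Lm" and LC: "real Lm \<le> C1 * x powr (1 + c)"
    and C1: "1 \<le> C1" and c: "0 < c" "c < 1" and x: "3 \<le> x"
  shows "real B \<le> (1 + (ln C1 + 2) / ln 2) * ln x"
proof -
  have lx: "1 \<le> ln x" using ln_ge1[OF x] .
  have l2: "0 < ln (2::real)" by simp
  have "real (B - 1) * ln 2 = ln ((2::real) ^ (B - 1))" by (simp add: ln_realpow)
  also have "\<dots> \<le> ln (real Lm)"
  proof -
    have "real (2 ^ (B - 1)) \<le> real Lm" using BL by (rule of_nat_mono)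
    hence "(2::real) ^ (B - 1) \<le> real Lm" by simp
    thus ?thesis using L1 by (subst ln_le_cancel_iff) auto
  qed
  also have "\<dots> \<le> ln (C1 * x powr (1 + c))"
    using LC L1 by (subst ln_le_cancel_iff) auto
  also have "\<dots> = ln C1 + (1 + c) * ln x" using C1 x by (simp add: ln_mult)
  also have "\<dots> \<le> ln C1 + 2 * ln x" using c lx by (intro add_left_mono mult_right_mono) auto
  finally have h: "real (B - 1) * ln 2 \<le> ln C1 + 2 * ln x" .
  have b1: "real B \<le> 1 + real (B - 1)" by linarith
  have b2: "real (B - 1) \<le> (ln C1 + 2 * ln x) / ln 2" using h l2 by (simp add: field_simps)
  have "ln C1 \<le> ln C1 * ln x" using C1 lx by (simp add: mult_le_cancel_left1)
  hence "ln C1 + 2 * ln x \<le> (ln C1 + 2) * ln x" by (simp add: algebra_simps)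
  hence b3: "(ln C1 + 2 * ln x) / ln 2 \<le> (ln C1 + 2) * ln x / ln 2" using l2 by (intro divide_right_mono) auto
  have "(1 + (ln C1 + 2) / ln 2) * ln x = ln x + (ln C1 + 2) * ln x / ln 2" by (simp add: algebra_simps)
  thus ?thesis using b1 b2 b3 lx by linarith
qed

lemma key_N:
  fixes L :: "nat \<Rightarrow> nat" and eps c \<rho> g C1 :: real
  assumes c: "0 < c" "c < 1" and e: "0 \<le> eps" "eps \<le> 1"
    and g: "g = (1 - \<rho>) / 2 - eps" "0 < g"
    and N3: "3 \<le> N" and L0: "2 \<le> L 0"
    and incr: "\<And>i j. i < j \<Longrightarrow> j < N \<Longrightarrow> L i < L j"
    and copr: "\<And>i j. i < N \<Longrightarrow> j < N \<Longrightarrow> i \<noteq> j \<Longrightarrow> coprime (L i) (L j)"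
    and LC: "real (L (N - 1)) \<le> C1 * real N powr (1 + c)" and C1: "1 \<le> C1"
    and KK: "1 \<le> KK" "KK \<le> N" and Kr: "real KK < (\<rho> + g) * real N"
  shows "\<forall>x < (\<Prod>i<KK. L i). success_prob eps N L (netq q N L KK) x \<ge> 1 - exp (- 2 * (g / 2)^2 * real N)"
    and "real (nn (netq True N L KK)) \<le> 11 * (1 + (ln C1 + 2) / ln 2) * real N * ln (real N)"
    and "real (nn (netq False N L KK)) \<le> 11 * C1 * real N powr (2 + 2 * c) * ln (real N)"
proof -
  define \<gamma> where "\<gamma> = g / 2"
  define t where "t = real ((N - KK) div 2) + 1 - eps * N"
  have N1: "1 \<le> N" using N3 by simp
  have Nr: "0 < real N" using N1 by simp
  have "N - KK \<le> 2 * ((N - KK) div 2) + 1" by linarith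
  hence "real (N - KK) \<le> real (2 * ((N - KK) div 2) + 1)" by (rule of_nat_mono)
  hence "real (N - KK) \<le> 2 * real ((N - KK) div 2) + 1" by simp
  hence tau: "real N - real KK - 1 \<le> 2 * real ((N - KK) div 2)" using KK by (simp add: of_nat_diff)
  have eq: "\<gamma> * real N = real N / 2 - (\<rho> + g) * real N / 2 - eps * real N"
    unfolding \<gamma>_def g(1) by (simp add: field_simps)
  have tge: "\<gamma> * real N \<le> t" unfolding t_def using tau Kr eq by linarith
  have gpos: "0 \<le> \<gamma> * real N" using g by (simp add: \<gamma>_def)
  have tnn: "0 \<le> t" using tge gpos by linarith
  have tnn': "real ((N - KK) div 2) + 1 - eps * real N \<ge> 0" using tnn by (simp add: t_def)
  have expb: "exp (-2 * t^2 / N) \<le> exp (- 2 * \<gamma>^2 * real N)"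
  proof -
    have "(\<gamma> * real N)^2 \<le> t^2" using tge gpos by (intro power_mono) auto
    hence "\<gamma>^2 * real N * real N \<le> t^2" by (simp add: power2_eq_square mult_ac)
    hence "\<gamma>^2 * real N \<le> t^2 / real N" using Nr by (simp add: field_simps)
    thus ?thesis by simp
  qed
  show "\<forall>x < (\<Prod>i<KK. L i). success_prob eps N L (netq q N L KK) x \<ge> 1 - exp (- 2 * (g / 2)^2 * real N)"
  proof (intro allI impI)
    fix x assume x: "x < (\<Prod>i<KK. L i)"
    have "success_prob eps N L (netq q N L KK) x \<ge> 1 - exp (-2 * t^2 / N)"
      unfolding t_def by (rule inst_success[OF N1 KK incr copr L0 e tnn' x])
    moreover have "exp (-2 * t^2 / N) \<le> exp (- 2 * (g / 2)^2 * real N)" using expb by (simp only: \<gamma>_def)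
    ultimately show "success_prob eps N L (netq q N L KK) x \<ge> 1 - exp (- 2 * (g / 2)^2 * real N)"
      by linarith
  qed
  define B where "B = Bof L N"
  define Lm where "Lm = L (N - 1)"
  have Lge: "i < N \<Longrightarrow> i + 2 \<le> L i" for i using incr_ge[of N L, OF incr L0] by blast
  have Lm1: "1 \<le> Lm" using Lge[of "N - 1"] N1 by (simp add: Lm_def)
  have B1: "1 \<le> B" using Bof_pos[of L N] Lm1 by (simp add: Lm_def B_def)
  have BLm: "B \<le> Lm" using Bof_le_L[of L N] Lm1 by (simp add: Lm_def B_def)
  have NB: "N \<le> N * B" "1 \<le> N * B" "B \<le> N * B" "KK * B \<le> N * B"
    using B1 N1 KK by (simp_all add: mult_le_mono1)
  have "nn (netq True N L KK) = 2 * (N * B) + 3 * N + 3 + 2 * B + KK * B"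
    by (simp add: netq_nn Wof_def B_def[symmetric])
  hence "nn (netq True N L KK) \<le> 11 * (N * B)" using NB by linarith
  hence "nn (netq True N L KK) \<le> 11 * N * B" by (simp add: mult.assoc)
  hence "real (nn (netq True N L KK)) \<le> real (11 * N * B)" by (rule of_nat_mono)
  hence "real (nn (netq True N L KK)) \<le> 11 * real N * real B" by simp
  also have "real B \<le> (1 + (ln C1 + 2) / ln 2) * ln (real N)"
    by (rule B_bound[OF Lm1 _ _ C1 c]) (use Bof_ge[of L N] Lm1 LC N3 in \<open>simp_all add: B_def Lm_def\<close>)
  finally show "real (nn (netq True N L KK)) \<le> 11 * (1 + (ln C1 + 2) / ln 2) * real N * ln (real N)"
    using Nr by (simp add: mult_ac)
  have NL1: "N \<le> N * Lm" "1 \<le> N * Lm" using Lm1 N1 by simp_all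
  have "Lm \<le> N * Lm" using N1 by simp
  hence NL2: "B \<le> N * Lm" using BLm by linarith
  have NL3: "KK * B \<le> N * Lm" using KK BLm by (intro mult_le_mono) auto
  have "nn (netq False N L KK) = 2 * (N * Lm) + 3 * N + 3 + 2 * B + KK * B"
    unfolding netq_nn Wof_def Lm_def B_def by simp
  hence "nn (netq False N L KK) \<le> 11 * (N * Lm)" using NL1 NL2 NL3 by linarith
  hence "nn (netq False N L KK) \<le> 11 * N * Lm" by (simp add: mult.assoc)
  hence "real (nn (netq False N L KK)) \<le> real (11 * N * Lm)" by (rule of_nat_mono)
  hence "real (nn (netq False N L KK)) \<le> 11 * real N * real Lm" by simp
  also have "\<dots> \<le> 11 * real N * (C1 * real N powr (1 + c))"
    using LC Nr by (simp add: Lm_def)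
  also have "\<dots> = 11 * C1 * real N powr (2 + c)"
  proof -
    have "real N powr (2 + c) = real N powr (1 + (1 + c))" by simp
    also have "\<dots> = real N powr 1 * real N powr (1 + c)" by (rule powr_add)
    also have "\<dots> = real N * real N powr (1 + c)" using Nr by simp
    finally have "real N * real N powr (1 + c) = real N powr (2 + c)" by simp
    thus ?thesis by (simp add: mult_ac)
  qed
  also have "\<dots> \<le> 11 * C1 * real N powr (2 + 2 * c)"
    using c C1 N1 by (intro mult_left_mono powr_mono) auto
  also have "\<dots> \<le> 11 * C1 * real N powr (2 + 2 * c) * ln (real N)"
  proof -
    have A: "0 \<le> 11 * C1 * real N powr (2 + 2 * c)" using C1 by simp
    have "1 \<le> ln (real N)" using ln_ge1[of "real N"] N3 by simp
    from mult_left_mono[OF this A] show ?thesis by simp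
  qed
  finally show "real (nn (netq False N L KK)) \<le> 11 * C1 * real N powr (2 + 2 * c) * ln (real N)" .
qed

theorem theorem2:
  fixes lam :: "nat \<Rightarrow> nat \<Rightarrow> nat" and K :: "nat \<Rightarrow> nat"
    and c \<rho> eps :: real
  assumes c: "0 < c" "c < 1"
    and pos: "\<And>N i. 1 \<le> N \<Longrightarrow> i < N \<Longrightarrow> 0 < lam N i"
    and incr: "\<And>N i j. 1 \<le> N \<Longrightarrow> i < j \<Longrightarrow> j < N \<Longrightarrow> lam N i < lam N j"
    and copr: "\<And>N i j. 1 \<le> N \<Longrightarrow> i < N \<Longrightarrow> j < N \<Longrightarrow> i \<noteq> j \<Longrightarrow> coprime (lam N i) (lam N j)"
    and first_order: "\<exists>c1 c2. 0 < c1 \<and> 0 < c2 \<and>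
        (\<forall>\<^sub>F N in sequentially. c1 * real N powr c \<le> real (lam N 0) \<and> real (lam N 0) \<le> c2 * real N powr c)"
    and last_bound: "\<exists>C. \<forall>\<^sub>F N in sequentially. real (lam N (N - 1)) \<le> C * real N powr (1 + c)"
    and Krange: "\<And>N. 1 \<le> N \<Longrightarrow> 1 \<le> K N \<and> K N \<le> N"
    and \<rho>: "0 < \<rho>" "\<rho> < 1"
    and Klim: "(\<lambda>N. real (K N) / real N) \<longlonglongrightarrow> \<rho>"
    and eps: "0 \<le> eps" "eps \<le> (1 - \<rho>) * c / (1 + c)^2"
  shows
    "(\<exists>net :: nat \<Rightarrow> bnn. \<exists>C \<delta>. \<delta> \<longlonglongrightarrow> 0 \<and>
       (\<forall>\<^sub>F N in sequentially.
          real (nn (net N)) \<le> C * real N * ln (real N) \<and>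
          (\<forall>x < (\<Prod>i<K N. lam N i). success_prob eps N (lam N) (net N) x \<ge> 1 - \<delta> N)))
   \<and> (\<exists>net :: nat \<Rightarrow> bnn. \<exists>C \<delta>. \<delta> \<longlonglongrightarrow> 0 \<and>
       (\<forall>\<^sub>F N in sequentially.
          linear_bnn (net N) \<and>
          real (nn (net N)) \<le> C * real N powr (2 + 2 * c) * ln (real N) \<and>
          (\<forall>x < (\<Prod>i<K N. lam N i). success_prob eps N (lam N) (net N) x \<ge> 1 - \<delta> N)))"
proof -
  obtain c1 c2 where c1: "0 < c1" and ev1r: "\<forall>\<^sub>F N in sequentially. c1 * real N powr c \<le> real (lam N 0)
      \<and> real (lam N 0) \<le> c2 * real N powr c"
    using first_order by blast
  have ev1: "\<forall>\<^sub>F N in sequentially. c1 * real N powr c \<le> real (lam N 0)"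
    using ev1r by (rule eventually_mono) blast
  obtain C0 where ev2: "\<forall>\<^sub>F N in sequentially. real (lam N (N - 1)) \<le> C0 * real N powr (1 + c)"
    using last_bound by blast
  define C1 where "C1 = max C0 1"
  have C1: "1 \<le> C1" by (simp add: C1_def)
  define g where "g = (1 - \<rho>) / 2 - eps"
  have cc: "c / (1 + c)^2 < 1 / 2"
  proof -
    have "2 * c < (1 + c)^2" by (simp add: power2_eq_square algebra_simps) (metis c(1) mult_pos_pos add_pos_pos zero_less_one less_add_same_cancel1 add.commute)
    moreover have "0 < (1 + c)^2" using c by simp
    ultimately show ?thesis by (simp add: field_simps)
  qed
  have "(1 - \<rho>) * c / (1 + c)^2 = (1 - \<rho>) * (c / (1 + c)^2)" by simp
  also have "\<dots> < (1 - \<rho>) * (1 / 2)" using cc \<rho> by (intro mult_strict_left_mono) auto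
  finally have hh: "(1 - \<rho>) * c / (1 + c)^2 < (1 - \<rho>) * (1 / 2)" .
  have eps2: "eps < (1 - \<rho>) / 2" using hh eps(2) by linarith
  have g0: "0 < g" using eps2 by (simp add: g_def)
  have e1: "eps \<le> 1" using eps2 \<rho> by simp
  define \<delta> where "\<delta> = (\<lambda>N::nat. exp (- 2 * (g / 2)^2 * real N))"
  have \<delta>0: "\<delta> \<longlonglongrightarrow> 0"
  proof -
    have "\<delta> = (\<lambda>N. exp (- 2 * (g / 2)^2) ^ N)"
      by (rule ext) (simp add: \<delta>_def exp_of_nat_mult[symmetric] mult_ac)
    moreover have "norm (exp (- 2 * (g / 2)^2)) < 1" using g0 by simp
    ultimately show ?thesis by (simp add: LIMSEQ_power_zero)
  qed
  define N0 where "N0 = nat \<lceil>(2 / c1) powr (1 / c)\<rceil>"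
  have ev3: "\<forall>\<^sub>F N in sequentially. max 3 N0 \<le> N" by (rule eventually_ge_at_top)
  have ev4: "\<forall>\<^sub>F N in sequentially. real (K N) / real N < \<rho> + g"
    using order_tendstoD(2)[OF Klim] g0 by simp
  have good: "\<forall>\<^sub>F N in sequentially. c1 * real N powr c \<le> real (lam N 0)
      \<and> real (lam N (N - 1)) \<le> C0 * real N powr (1 + c) \<and> max 3 N0 \<le> N
      \<and> real (K N) / real N < \<rho> + g"
    using ev1 ev2 ev3 ev4 by eventually_elim blast
  have key: "(\<forall>x < (\<Prod>i<K N. lam N i). success_prob eps N (lam N) (netq q N (lam N) (K N)) x \<ge> 1 - \<delta> N)
      \<and> real (nn (netq True N (lam N) (K N))) \<le> 11 * (1 + (ln C1 + 2) / ln 2) * real N * ln (real N)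
      \<and> real (nn (netq False N (lam N) (K N))) \<le> 11 * C1 * real N powr (2 + 2 * c) * ln (real N)"
    if h: "c1 * real N powr c \<le> real (lam N 0)" "real (lam N (N - 1)) \<le> C0 * real N powr (1 + c)"
      "max 3 N0 \<le> N" "real (K N) / real N < \<rho> + g" for N q
  proof -
    have N3: "3 \<le> N" using h(3) by simp
    have N1: "1 \<le> N" using N3 by simp
    have Nr: "0 < real N" using N1 by simp
    have L0: "2 \<le> lam N 0"
    proof -
      have "(2 / c1) powr (1 / c) \<le> real N" using h(3) by (simp add: N0_def)
      hence "((2 / c1) powr (1 / c)) powr c \<le> real N powr c" using c by (intro powr_mono2) auto
      also have "((2 / c1) powr (1 / c)) powr c = 2 / c1" using c c1 by (simp add: powr_powr)
      finally have "2 \<le> c1 * real N powr c" using c1 by (simp add: field_simps)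
      hence "2 \<le> real (lam N 0)" using h(1) by linarith
      thus ?thesis by simp
    qed
    have LC: "real (lam N (N - 1)) \<le> C1 * real N powr (1 + c)"
      using h(2) by (rule order.trans) (simp add: C1_def mult_right_mono)
    have Kr: "real (K N) < (\<rho> + g) * real N" using h(4) Nr by (simp add: divide_less_eq)
    have KK: "1 \<le> K N" "K N \<le> N" using Krange[OF N1] by auto
    show ?thesis
      using key_N(1)[OF c eps(1) e1 g_def g0 N3 L0 incr[OF N1] copr[OF N1] LC C1 KK Kr, of q]
        key_N(2,3)[OF c eps(1) e1 g_def g0 N3 L0 incr[OF N1] copr[OF N1] LC C1 KK Kr]
      by (simp add: \<delta>_def)
  qed
  show ?thesis
  proof (intro conjI exI)
    show "\<delta> \<longlonglongrightarrow> 0" by (rule \<delta>0)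
    show "\<forall>\<^sub>F N in sequentially. real (nn (netq True N (lam N) (K N))) \<le> 11 * (1 + (ln C1 + 2) / ln 2) * real N * ln (real N)
        \<and> (\<forall>x<\<Prod>i<K N. lam N i. 1 - \<delta> N \<le> success_prob eps N (lam N) (netq True N (lam N) (K N)) x)"
      using good by (rule eventually_mono) (use key in blast)
    show "\<delta> \<longlonglongrightarrow> 0" by (rule \<delta>0)
    show "\<forall>\<^sub>F N in sequentially. linear_bnn (netq False N (lam N) (K N)) \<and>
        real (nn (netq False N (lam N) (K N))) \<le> 11 * C1 * real N powr (2 + 2 * c) * ln (real N)
        \<and> (\<forall>x<\<Prod>i<K N. lam N i. 1 - \<delta> N \<le> success_prob eps N (lam N) (netq False N (lam N) (K N)) x)"
      using good by (rule eventually_mono) (use key netq_linear in blast)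
  qed
qed

end
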